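(* Let $\lambda>0$ and $2<q<3$. Let $f_1(c_0)=c_0^{q-2}/M_2(\lambda,c_0)$, $f_2(c_0)=c_0^{q-3}/M_3(\lambda,c_0)$ and $\xi(c_0)=\max\{f_1(c_0),f_2(c_0)\}$ for $c_0>0$. Then $f_1$ is nondecreasing, $f_2$ is nonincreasing, and $$\inf_{c_0>0}\xi(c_0)=M_2(\lambda,c^* )^{q-3}M_3(\lambda,c^* )^{2-q},$$ where $c^*$ is the unique fixed point of the function $c_0\mapsto M_2(\lambda,c_0)/M_3(\lambda,c_0)$.
   Context: For $A\in\mathbb{R}^{3\times3}$ let $\lambda_1(A),\lambda_2(A),\lambda_3(A)$ be its singular values, $P(A)=\sum_{1\le i<j\le3}\lambda_i(A)\lambda_j(A)-\lambda\sum_i\lambda_i(A)$, $N(A)=\operatorname{tr}\operatorname{cof}A-\lambda\operatorname{tr}A$ (cof the cofactor matrix), and $G(A)=P(A)-N(A)$. $|\cdot|$ is the Frobenius norm and $\mathbf{1}$ the identity. For $c_0>0$: $M_2(\lambda,c_0)=\sup\{|G(A)|/|A-\lambda\mathbf{1}|^2:\ |A-\lambda\mathbf{1}|\ge c_0\}$ and $M_3(\lambda,c_0)=\sup\{|G(A)|/|A-\lambda\mathbf{1}|^3:\ 0<|A-\lambda\mathbf{1}|<c_0\}$. *)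

theory Defs
  imports "HOL-Analysis.Analysis"
begin

type_synonym mat3 = "real^3^3"

text \<open>Cofactor matrix: entry (i,j) is (-1)^(i+j) times the (i,j) minor, written
  (as in HOL Light) as the determinant of A with row i and column j replaced by unit vectors.\<close>
definition cof :: "mat3 \<Rightarrow> mat3" where
  "cof A = (\<chi> i j. det (\<chi> k l. if k = i \<and> l = j then 1
                               else if k = i \<or> l = j then 0 else A$k$l))"

text \<open>Singular values: nonnegative square roots of the eigenvalues of A^T A,
  counted with multiplicity (i.e. the characteristic polynomial of A^T A factors
  as the product of (x - s_i^2)).\<close>
definition is_sing_vals :: "mat3 \<Rightarrow> real^3 \<Rightarrow> bool" where
  "is_sing_vals A s \<longleftrightarrow> (\<forall>i. s$i \<ge> 0) \<and>
     (\<forall>x::real. det (x *\<^sub>R mat 1 - transpose A ** A) = (\<Prod>i\<in>UNIV. x - (s$i)^2))"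

definition sing_vals :: "mat3 \<Rightarrow> real^3" where
  "sing_vals A = (SOME s. is_sing_vals A s)"

definition Pfun :: "real \<Rightarrow> mat3 \<Rightarrow> real" where
  "Pfun lam A = (let s = sing_vals A in
     (s$1 * s$2 + s$1 * s$3 + s$2 * s$3) - lam * (s$1 + s$2 + s$3))"

definition Nfun :: "real \<Rightarrow> mat3 \<Rightarrow> real" where
  "Nfun lam A = trace (cof A) - lam * trace A"

definition Gfun :: "real \<Rightarrow> mat3 \<Rightarrow> real" where
  "Gfun lam A = Pfun lam A - Nfun lam A"

text \<open>Frobenius norm = the Euclidean norm on real^3^3 (library norm).\<close>
definition M2 :: "real \<Rightarrow> real \<Rightarrow> real" where
  "M2 lam c0 = (SUP A\<in>{A::mat3. norm (A - lam *\<^sub>R mat 1) \<ge> c0}.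
                  \<bar>Gfun lam A\<bar> / norm (A - lam *\<^sub>R mat 1) ^ 2)"

definition M3 :: "real \<Rightarrow> real \<Rightarrow> real" where
  "M3 lam c0 = (SUP A\<in>{A::mat3. 0 < norm (A - lam *\<^sub>R mat 1) \<and> norm (A - lam *\<^sub>R mat 1) < c0}.
                  \<bar>Gfun lam A\<bar> / norm (A - lam *\<^sub>R mat 1) ^ 3)"

end

theory Submission
  imports Defs
begin


definition E1 :: "mat3 \<Rightarrow> real" where
 "E1 A = (A$1$1)^2 + (A$1$2)^2 + (A$1$3)^2 + (A$2$1)^2 + (A$2$2)^2 + (A$2$3)^2 + (A$3$1)^2 + (A$3$2)^2 + (A$3$3)^2"

definition m2 :: "real \<Rightarrow> real \<Rightarrow> real \<Rightarrow> real \<Rightarrow> real" where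
 "m2 a b c d = a*d - b*c"

definition E2 :: "mat3 \<Rightarrow> real" where
 "E2 A = (m2 (A$1$1) (A$1$2) (A$2$1) (A$2$2))^2 + (m2 (A$1$1) (A$1$3) (A$2$1) (A$2$3))^2 + (m2 (A$1$2) (A$1$3) (A$2$2) (A$2$3))^2
       + (m2 (A$1$1) (A$1$2) (A$3$1) (A$3$2))^2 + (m2 (A$1$1) (A$1$3) (A$3$1) (A$3$3))^2 + (m2 (A$1$2) (A$1$3) (A$3$2) (A$3$3))^2
       + (m2 (A$2$1) (A$2$2) (A$3$1) (A$3$2))^2 + (m2 (A$2$1) (A$2$3) (A$3$1) (A$3$3))^2 + (m2 (A$2$2) (A$2$3) (A$3$2) (A$3$3))^2"

lemma charpoly:
  "det (x *\<^sub>R mat 1 - transpose A ** A) = x^3 - E1 A * x^2 + E2 A * x - (det A)^2"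
  unfolding det_3 E1_def E2_def m2_def
  by (simp add: matrix_matrix_mult_def sum_3 transpose_def mat_def) algebra

lemma cof_explicit:
  "cof A $1$1 = A$2$2*A$3$3 - A$2$3*A$3$2"
  "cof A $2$2 = A$1$1*A$3$3 - A$1$3*A$3$1"
  "cof A $3$3 = A$1$1*A$2$2 - A$1$2*A$2$1"
  unfolding cof_def det_3 by simp_all

lemma trace3: "trace (A::mat3) = A$1$1 + A$2$2 + A$3$3"
  by (simp add: trace_def sum_3)

lemma norm_mat3: "norm (A::mat3) = sqrt (E1 A)"
  by (simp add: norm_vec_def L2_set_def sum_3 E1_def real_norm_def add.assoc)


lemma det_zero_kernel:
  fixes M :: mat3
  assumes "det M = 0" shows "\<exists>v. v \<noteq> 0 \<and> M *v v = 0"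
proof -
  have "\<not> inj ((*v) M)"
    using det_nz_iff_inj[of "(*v) M"] assms by simp
  then show ?thesis
    using linear_injective_0[of "(*v) M"] by auto
qed

lemma inner3: "(x::real^3) \<bullet> y = x$1*y$1 + x$2*y$2 + x$3*y$3"
  by (simp add: inner_vec_def sum_3)

lemma hh_sq:
  fixes u :: "real^3"
  assumes d: "u$1*u$1 + u$2*u$2 + u$3*u$3 = d" "d \<noteq> 0"
  defines "Q \<equiv> (\<chi> i j. (if i = j then 1 else 0) - 2 * u$i * u$j / d) :: mat3"
  shows "Q ** Q = mat 1"
proof -
  have "(Q ** Q)$i$j = mat 1 $i$j" for i j
  proof -
    have e: "(Q ** Q)$i$j = (\<Sum>k\<in>UNIV. ((if i = k then 1 else 0) - 2 * u$i * u$k / d) * ((if k = j then 1 else 0) - 2 * u$k * u$j / d))"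
      by (simp add: Q_def matrix_matrix_mult_def)
    also have "\<dots> = (if i = j then 1 else 0) - 4 * u$i * u$j / d + 4 * u$i * u$j * (u$1*u$1 + u$2*u$2 + u$3*u$3) / (d*d)"
      using exhaust_3[of i] exhaust_3[of j] d(2)
      by (auto simp: sum_3 field_simps)
    also have "\<dots> = mat 1 $i$j" using d by (simp add: mat_def field_simps)
    finally show ?thesis .
  qed
  then show ?thesis by (simp add: vec_eq_iff)
qed

lemma householder:
  fixes v :: "real^3"
  assumes "v \<bullet> v = 1"
  shows "\<exists>Q::mat3. transpose Q ** Q = mat 1 \<and> Q ** transpose Q = mat 1 \<and> Q *v v = axis 3 1"
proof (cases "v = axis 3 1")
  case True then show ?thesis by (intro exI[of _ "mat 1"]) simp
next
  case False
  have ne: "v$1 \<noteq> 0 \<or> v$2 \<noteq> 0 \<or> v$3 \<noteq> 1"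
  proof (rule ccontr)
    assume "\<not> ?thesis"
    then have "v = axis 3 1" by (simp add: vec_eq_iff forall_3 axis_def)
    with False show False by simp
  qed
  have nn: "v$1 * v$1 + v$2 * v$2 + v$3 * v$3 = 1" using assms by (simp add: inner3)
  define u where "u = v - axis 3 1"
  have comps: "u$1 = v$1" "u$2 = v$2" "u$3 = v$3 - 1"
    by (simp_all add: axis_def u_def)
  define d where "d = u$1*u$1 + u$2*u$2 + u$3*u$3"
  have dpos: "d > 0"
  proof -
    have a: "u$1 * u$1 \<ge> 0" "u$2 * u$2 \<ge> 0" "u$3*u$3 \<ge> 0" by simp_all
    have "u$1 * u$1 > 0 \<or> u$2 * u$2 > 0 \<or> u$3*u$3 > 0"
      using ne comps by (metis not_real_square_gt_zero right_minus_eq)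
    then show ?thesis unfolding d_def using a by linarith
  qed
  have dd: "d = 2 - 2 * v$3" unfolding d_def comps using nn by algebra
  define Q :: mat3 where "Q = (\<chi> i j. (if i = j then 1 else 0) - 2 * u$i * u$j / d)"
  have Qs: "transpose Q = Q"
    by (auto simp: Q_def transpose_def vec_eq_iff algebra_simps)
  have QQ: "Q ** Q = mat 1"
    unfolding Q_def by (rule hh_sq) (use dpos in \<open>simp_all add: d_def\<close>)
  have "(Q *v v)$i = axis 3 1 $ i" for i
  proof -
    have "(Q *v v)$i = v$i - 2 * u$i * (u$1* v$1 + u$2* v$2 + u$3* v$3) / d"
      using exhaust_3[of i] dpos by (auto simp: Q_def matrix_vector_mult_def sum_3 field_simps)
    also have "u$1* v$1 + u$2* v$2 + u$3* v$3 = d/2"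
      unfolding comps dd using nn by algebra
    also have "v$i - 2 * u$i * (d/2) / d = v$i - u$i" using dpos by simp
    also have "\<dots> = axis 3 1 $ i" by (simp add: u_def)
    finally show ?thesis .
  qed
  then have Qv: "Q *v v = axis 3 1" by (simp add: vec_eq_iff)
  show ?thesis using QQ Qs Qv by (intro exI[of _ Q]) simp
qed


lemma prod_3: "prod f (UNIV::3 set) = f 1 * f 2 * f 3"
  unfolding UNIV_3 by (simp add: ac_simps)

lemma mm_diff_l: "(A::mat3) ** (B - C) = A ** B - A ** C"
  by (simp add: matrix_matrix_mult_def vec_eq_iff sum_subtractf algebra_simps)
lemma mm_diff_r: "((B::mat3) - C) ** A = B ** A - C ** A"
  by (simp add: matrix_matrix_mult_def vec_eq_iff sum_subtractf algebra_simps)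
lemma mm_scale_l: "(A::mat3) ** (x *\<^sub>R B) = x *\<^sub>R (A ** B)"
  by (simp add: matrix_matrix_mult_def vec_eq_iff sum_distrib_left algebra_simps)
lemma mm_scale_r: "(x *\<^sub>R (B::mat3)) ** A = x *\<^sub>R (B ** A)"
  by (simp add: matrix_matrix_mult_def vec_eq_iff sum_distrib_left algebra_simps)

lemma E1_nonneg: "E1 A \<ge> 0" unfolding E1_def by simp
lemma E2_nonneg: "E2 A \<ge> 0" unfolding E2_def by simp

lemma is_sing_vals_iff:
  "is_sing_vals A s \<longleftrightarrow> (\<forall>i. s$i \<ge> 0) \<and>
     (\<forall>x. x^3 - E1 A * x^2 + E2 A * x - (det A)^2 = (x - (s$1)^2) * (x - (s$2)^2) * (x - (s$3)^2))"
  unfolding is_sing_vals_def charpoly prod_3 by simp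

lemma charpoly_neg:
  assumes "r < 0" shows "r^3 - E1 A * r^2 + E2 A * r - (det A)^2 < 0"
proof -
  have "r^3 < 0" using assms by (simp add: power_less_zero_eq)
  moreover have "E1 A * r^2 \<ge> 0" using E1_nonneg by simp
  moreover have "E2 A * r \<le> 0" using E2_nonneg assms by (simp add: mult_nonneg_nonpos)
  moreover have "(det A)^2 \<ge> 0" by simp
  ultimately show ?thesis by linarith
qed

lemma sing_vals_exist: "\<exists>s. is_sing_vals A s"
proof -
  define B where "B = transpose A ** A"
  define p where "p = (\<lambda>x::real. x^3 - E1 A * x^2 + E2 A * x - (det A)^2)"
  have pdet: "det (x *\<^sub>R mat 1 - B) = p x" for x unfolding B_def p_def by (rule charpoly)
  define X where "X = 1 + E1 A + (det A)^2"
  have X1: "X \<ge> 1" "X \<ge> E1 A + 1" "X > (det A)^2" unfolding X_def using E1_nonneg[of A] by auto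
  have "p X \<ge> X^2 - (det A)^2"
  proof -
    have "X^3 - E1 A * X^2 = X^2 * (X - E1 A)" by (simp add: algebra_simps power2_eq_square power3_eq_cube)
    moreover have "X^2 * (X - E1 A) \<ge> X^2 * 1" using X1 by (intro mult_left_mono) auto
    ultimately have "X^3 - E1 A * X^2 \<ge> X^2" by simp
    moreover have "E2 A * X \<ge> 0" using E2_nonneg X1 by simp
    ultimately show ?thesis unfolding p_def by linarith
  qed
  moreover have "X^2 \<ge> X" using X1 by (simp add: power2_eq_square)
  ultimately have pX: "p X > 0" using X1 by linarith
  have p0: "p 0 \<le> 0" unfolding p_def by simp
  have "continuous_on {0..X} p" unfolding p_def by (intro continuous_intros)
  then obtain mu where mu: "p mu = 0"
    using IVT'[of p 0 0 X] p0 pX X1 by auto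
  then have "det (mu *\<^sub>R mat 1 - B) = 0" using pdet by simp
  then obtain v where v: "v \<noteq> 0" "(mu *\<^sub>R mat 1 - B) *v v = 0"
    using det_zero_kernel by blast
  define w where "w = v /\<^sub>R norm v"
  have ww: "w \<bullet> w = 1" using v(1) unfolding w_def
    by (simp add: inner_commute power2_norm_eq_inner[symmetric] divide_simps)
  have Bw: "B *v w = mu *\<^sub>R w"
  proof -
    have "B *v v = mu *\<^sub>R v" using v(2)
      by (simp add: matrix_vector_mult_diff_rdistrib scaleR_matrix_vector_assoc[symmetric])
    then show ?thesis unfolding w_def
      by (simp add: matrix_vector_mult_scaleR scaleR_scaleR mult.commute)
  qed
  obtain Q :: mat3 where Q: "transpose Q ** Q = mat 1" "Q ** transpose Q = mat 1" "Q *v w = axis 3 1"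
    using householder[OF ww] by blast
  define C where "C = Q ** B ** transpose Q"
  have Csym: "transpose C = C"
    unfolding C_def B_def by (simp add: matrix_transpose_mul matrix_mul_assoc)
  have "C *v axis 3 1 = mu *\<^sub>R axis 3 1"
  proof -
    have "transpose Q *v axis 3 1 = w" using Q
      by (metis matrix_vector_mul_assoc matrix_vector_mul_lid)
    then show ?thesis unfolding C_def using Q(3) Bw
      by (simp add: matrix_vector_mul_assoc[symmetric] matrix_vector_mult_scaleR)
  qed
  then have C3: "C$1$3 = 0" "C$2$3 = 0" "C$3$3 = mu"
    by (auto simp: vec_eq_iff forall_3 matrix_vector_mult_def sum_3 axis_def)
  have Cij: "C$i$j = C$j$i" for i j
  proof -
    have "(transpose C)$i$j = C$j$i" by (simp add: transpose_def)
    then show ?thesis using Csym by simp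
  qed
  have C3': "C$3$1 = 0" "C$3$2 = 0" "C$2$1 = C$1$2"
    using Cij[of 3 1] Cij[of 3 2] Cij[of 2 1] C3 by simp_all
  have sim: "det (x *\<^sub>R mat 1 - B) = det (x *\<^sub>R mat 1 - C)" for x
  proof -
    have "x *\<^sub>R mat 1 - C = Q ** (x *\<^sub>R mat 1 - B) ** transpose Q"
      unfolding C_def using Q
      by (simp add: mm_diff_l mm_diff_r mm_scale_l mm_scale_r matrix_mul_assoc)
    then have "det (x *\<^sub>R mat 1 - C) = det Q * det (x *\<^sub>R mat 1 - B) * det (transpose Q)"
      by (simp add: det_mul)
    also have "\<dots> = det (x *\<^sub>R mat 1 - B) * det (Q ** transpose Q)" by (simp add: det_mul)
    finally show ?thesis using Q by simp
  qed
  define a where "a = C$1$1"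
  define b where "b = C$1$2"
  define c where "c = C$2$2"
  define D where "D = sqrt ((a - c)^2 + 4*b^2)"
  have DD: "D^2 = (a-c)^2 + 4*b^2" unfolding D_def by simp
  define r2 where "r2 = (a + c + D)/2"
  define r3 where "r3 = (a + c - D)/2"
  have fact: "p x = (x - mu) * (x - r2) * (x - r3)" for x
  proof -
    have "p x = det (x *\<^sub>R mat 1 - C)" using pdet sim by simp
    also have "\<dots> = (x - mu) * ((x - a) * (x - c) - b^2)"
      unfolding det_3 by (simp add: mat_def C3 C3' a_def[symmetric] b_def[symmetric] c_def[symmetric]; algebra)
    also have "(x - a) * (x - c) - b^2 = (x - r2) * (x - r3)"
      unfolding r2_def r3_def using DD by (simp add: field_simps power2_eq_square; algebra)
    finally show ?thesis by (simp add: mult.assoc)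
  qed
  have nonneg: "r \<ge> 0" if "p r = 0" for r
    using charpoly_neg[of r A] that unfolding p_def by force
  have r: "mu \<ge> 0" "r2 \<ge> 0" "r3 \<ge> 0"
    using nonneg fact by (auto intro!: nonneg simp: fact)
  define s :: "real^3" where "s = vector [sqrt mu, sqrt r2, sqrt r3]"
  have "is_sing_vals A s"
    unfolding is_sing_vals_iff
  proof (intro conjI allI)
    fix i show "s$i \<ge> 0" using exhaust_3[of i] r unfolding s_def by auto
  next
    fix x show "x^3 - E1 A * x^2 + E2 A * x - (det A)^2 = (x - (s$1)^2) * (x - (s$2)^2) * (x - (s$3)^2)"
      using fact[of x] r unfolding s_def p_def by simp
  qed
  then show ?thesis by blast
qed


lemma cubic_coeff:
  fixes p q r p' q' r' :: real
  assumes "\<forall>x. x^3 + p*x^2 + q*x + r = x^3 + p'*x^2 + q'*x + r'"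
  shows "p = p' \<and> q = q' \<and> r = r'"
proof -
  have "r = r'" using assms[rule_format, of 0] by simp
  moreover have "p + q = p' + q'" using assms[rule_format, of 1] \<open>r = r'\<close> by simp
  moreover have "p - q = p' - q'" using assms[rule_format, of "-1"] \<open>r = r'\<close> by simp
  ultimately show ?thesis by linarith
qed

lemma two_roots:
  fixes b c b' c' :: real
  assumes "b' + c' = b + c" "b' * c' = b * c"
  shows "(b' = b \<and> c' = c) \<or> (b' = c \<and> c' = b)"
proof -
  have "(b' - b) * (b' - c) = 0"
  proof -
    have "(b' - b) * (b' - c) = b'*b' - b'*(b+c) + b*c" by algebra
    also have "\<dots> = b'*b' - b'*(b'+c') + b'*c'" using assms by simp
    also have "\<dots> = 0" by algebra
    finally show ?thesis .
  qed
  then have "b' = b \<or> b' = c" by simp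
  then show ?thesis using assms(1) by auto
qed

lemma cubic_roots_perm:
  fixes a b c a' b' c' :: real
  assumes H: "\<forall>x. (x-a)*(x-b)*(x-c) = (x-a')*(x-b')*(x-c')"
  shows "(a'=a \<and> b'=b \<and> c'=c) \<or> (a'=a \<and> b'=c \<and> c'=b) \<or> (a'=b \<and> b'=a \<and> c'=c) \<or>
         (a'=b \<and> b'=c \<and> c'=a) \<or> (a'=c \<and> b'=a \<and> c'=b) \<or> (a'=c \<and> b'=b \<and> c'=a)"
proof -
  have "\<forall>x. x^3 + (-(a+b+c))*x^2 + (a*b+a*c+b*c)*x + (-(a*b*c)) =
            x^3 + (-(a'+b'+c'))*x^2 + (a'*b'+a'*c'+b'*c')*x + (-(a'*b'*c'))"
  proof
    fix x
    have "x^3 + (-(a+b+c))*x^2 + (a*b+a*c+b*c)*x + (-(a*b*c)) = (x-a)*(x-b)*(x-c)"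
      by (simp add: algebra_simps power2_eq_square power3_eq_cube)
    also have "\<dots> = (x-a')*(x-b')*(x-c')" using H by simp
    also have "\<dots> = x^3 + (-(a'+b'+c'))*x^2 + (a'*b'+a'*c'+b'*c')*x + (-(a'*b'*c'))"
      by (simp add: algebra_simps power2_eq_square power3_eq_cube)
    finally show "x^3 + (-(a+b+c))*x^2 + (a*b+a*c+b*c)*x + (-(a*b*c)) =
            x^3 + (-(a'+b'+c'))*x^2 + (a'*b'+a'*c'+b'*c')*x + (-(a'*b'*c'))" .
  qed
  from cubic_coeff[OF this] have S1: "a+b+c = a'+b'+c'" and S2: "a*b+a*c+b*c = a'*b'+a'*c'+b'*c'"
    by auto
  have "(a'-a)*(a'-b)*(a'-c) = 0" using H[rule_format, of a'] by simp
  then have "a' = a \<or> a' = b \<or> a' = c" by auto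
  then show ?thesis
  proof (elim disjE)
    assume e: "a' = a"
    have "b' + c' = b + c" using S1 e by simp
    moreover have "b' * c' = b * c"
    proof -
      have "a*(b+c) + b*c = a*(b'+c') + b'*c'" using S2 e by (simp add: algebra_simps)
      then show ?thesis using \<open>b' + c' = b + c\<close> by simp
    qed
    ultimately show ?thesis using two_roots e by blast
  next
    assume e: "a' = b"
    have "b' + c' = a + c" using S1 e by simp
    moreover have "b' * c' = a * c"
    proof -
      have "b*(a+c) + a*c = b*(b'+c') + b'*c'" using S2 e by (simp add: algebra_simps)
      then show ?thesis using \<open>b' + c' = a + c\<close> by simp
    qed
    ultimately show ?thesis using two_roots e by blast
  next
    assume e: "a' = c"
    have "b' + c' = a + b" using S1 e by simp
    moreover have "b' * c' = a * b"
    proof -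
      have "c*(a+b) + a*b = c*(b'+c') + b'*c'" using S2 e by (simp add: algebra_simps)
      then show ?thesis using \<open>b' + c' = a + b\<close> by simp
    qed
    ultimately show ?thesis using two_roots e by blast
  qed
qed

definition sg1 :: "real^3 \<Rightarrow> real" where "sg1 s = s$1 + s$2 + s$3"
definition sg2 :: "real^3 \<Rightarrow> real" where "sg2 s = s$1 * s$2 + s$1 * s$3 + s$2 * s$3"
definition sg3 :: "real^3 \<Rightarrow> real" where "sg3 s = s$1 * s$2 * s$3"

lemma sq_eq_nonneg: "(x::real) \<ge> 0 \<Longrightarrow> y \<ge> 0 \<Longrightarrow> x^2 = y^2 \<Longrightarrow> x = y"
  using power2_eq_iff_nonneg by blast

lemma sing_unique:
  assumes s: "is_sing_vals A s" and t: "is_sing_vals A t"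
  shows "sg1 s = sg1 t \<and> sg2 s = sg2 t"
proof -
  have nn: "\<forall>i. s$i \<ge> 0" "\<forall>i. t$i \<ge> 0" using s t unfolding is_sing_vals_iff by auto
  have "\<forall>x. (x - (s$1)^2) * (x - (s$2)^2) * (x - (s$3)^2) = (x - (t$1)^2) * (x - (t$2)^2) * (x - (t$3)^2)"
    using s t unfolding is_sing_vals_iff by metis
  from cubic_roots_perm[OF this] nn
  have "(t$1=s$1 \<and> t$2=s$2 \<and> t$3=s$3) \<or> (t$1=s$1 \<and> t$2=s$3 \<and> t$3=s$2) \<or> (t$1=s$2 \<and> t$2=s$1 \<and> t$3=s$3) \<or>
         (t$1=s$2 \<and> t$2=s$3 \<and> t$3=s$1) \<or> (t$1=s$3 \<and> t$2=s$1 \<and> t$3=s$2) \<or> (t$1=s$3 \<and> t$2=s$2 \<and> t$3=s$1)"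
    by (metis sq_eq_nonneg)
  then show ?thesis unfolding sg1_def sg2_def by (elim disjE) (simp_all add: algebra_simps)
qed

lemma sing_vals_valid: "is_sing_vals A (sing_vals A)"
  unfolding sing_vals_def using sing_vals_exist by (rule someI_ex)

lemma Pfun_eq: "Pfun lam A = sg2 (sing_vals A) - lam * sg1 (sing_vals A)"
  unfolding Pfun_def sg1_def sg2_def Let_def by simp

lemma Pfun_valid: "is_sing_vals A s \<Longrightarrow> Pfun lam A = sg2 s - lam * sg1 s"
  using sing_unique[OF sing_vals_valid] Pfun_eq by metis

lemma valid_coeffs:
  assumes "is_sing_vals A s"
  shows "(s$1)^2 + (s$2)^2 + (s$3)^2 = E1 A"
    "(s$1)^2*(s$2)^2 + (s$1)^2*(s$3)^2 + (s$2)^2*(s$3)^2 = E2 A"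
    "(s$1)^2*(s$2)^2*(s$3)^2 = (det A)^2"
proof -
  have "\<forall>x. x^3 + (- (E1 A)) * x^2 + (E2 A) * x + (- ((det A)^2)) =
     x^3 + (-((s$1)^2 + (s$2)^2 + (s$3)^2))*x^2 + ((s$1)^2*(s$2)^2 + (s$1)^2*(s$3)^2 + (s$2)^2*(s$3)^2)*x + (-((s$1)^2*(s$2)^2*(s$3)^2))"
  proof
    fix x
    have "x^3 + (- (E1 A)) * x^2 + (E2 A) * x + (- ((det A)^2)) = (x - (s$1)^2) * (x - (s$2)^2) * (x - (s$3)^2)"
      using assms unfolding is_sing_vals_iff by simp
    then show "x^3 + (- (E1 A)) * x^2 + (E2 A) * x + (- ((det A)^2)) =
     x^3 + (-((s$1)^2 + (s$2)^2 + (s$3)^2))*x^2 + ((s$1)^2*(s$2)^2 + (s$1)^2*(s$3)^2 + (s$2)^2*(s$3)^2)*x + (-((s$1)^2*(s$2)^2*(s$3)^2))"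
      by (simp add: algebra_simps power2_eq_square power3_eq_cube)
  qed
  from cubic_coeff[OF this] show "(s$1)^2 + (s$2)^2 + (s$3)^2 = E1 A"
    "(s$1)^2*(s$2)^2 + (s$1)^2*(s$3)^2 + (s$2)^2*(s$3)^2 = E2 A"
    "(s$1)^2*(s$2)^2*(s$3)^2 = (det A)^2" by auto
qed

lemma valid_rels:
  assumes "is_sing_vals A s"
  shows "(sg1 s)^2 = E1 A + 2 * sg2 s"
    "(sg2 s)^2 = E2 A + 2 * sg1 s * sg3 s"
    "sg3 s = \<bar>det A\<bar>"
    "sg1 s \<ge> 0" "sg2 s \<ge> 0"
proof -
  note c = valid_coeffs[OF assms]
  have nn: "s$1 \<ge> 0" "s$2 \<ge> 0" "s$3 \<ge> 0" using assms unfolding is_sing_vals_iff by auto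
  show "(sg1 s)^2 = E1 A + 2 * sg2 s" unfolding sg1_def sg2_def c(1)[symmetric]
    by (simp add: algebra_simps power2_eq_square)
  show "(sg2 s)^2 = E2 A + 2 * sg1 s * sg3 s" unfolding sg1_def sg2_def sg3_def c(2)[symmetric]
    by (simp add: algebra_simps power2_eq_square)
  have "(sg3 s)^2 = (\<bar>det A\<bar>)^2" unfolding sg3_def using c(3) by (simp add: power_mult_distrib)
  moreover have "sg3 s \<ge> 0" unfolding sg3_def using nn by simp
  ultimately show "sg3 s = \<bar>det A\<bar>" by (metis abs_ge_zero power2_abs sq_eq_nonneg)
  show "sg1 s \<ge> 0" "sg2 s \<ge> 0" unfolding sg1_def sg2_def using nn by simp_all
qed


lemma abs_mul_le: "\<bar>a::real\<bar> \<le> A \<Longrightarrow> \<bar>b\<bar> \<le> B \<Longrightarrow> \<bar>a*b\<bar> \<le> A*B"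
  by (simp add: abs_mult mult_mono')

lemma abs3: "\<bar>a::real\<bar> \<le> A \<Longrightarrow> \<bar>b\<bar> \<le> B \<Longrightarrow> 0 \<le> w \<Longrightarrow> w \<le> W \<Longrightarrow> \<bar>a + b - w\<bar> \<le> A + B + W"
  by (simp add: abs_le_iff)

lemma core_cubic:
  fixes h t k dl w wc z u :: real
  assumes h0: "0 \<le> h" and h1: "h \<le> 1/1000"
    and ht: "\<bar>t\<bar> \<le> 2*h" and hk: "\<bar>k\<bar> \<le> 6*h^2" and hd: "\<bar>dl\<bar> \<le> 6*h^3"
    and hw: "0 \<le> w" "w \<le> h^2" and hwc: "\<bar>wc - w\<bar> \<le> 25*h^3"
    and s1nn: "3 + t + z \<ge> 0"
    and amgm: "(3 + t + z)^3 \<ge> 27 * \<bar>1 + t + k + dl\<bar>"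
    and cs: "(3 + t + z)^2 \<le> 3 * (3 + 2*t + h^2)"
    and R1: "(3+t+z)^2 = (3+t)^2 - 2*(3 + 2*t + k) + 2*w + 2*(3 + 2*t + k + u)"
    and R2: "(3 + 2*t + k + u)^2 = (3+2*t+k)^2 - 2*(3+t)*(1+t+k+dl) + 2*wc + 2*(3+t+z)*\<bar>1+t+k+dl\<bar>"
  shows "\<bar>u - z\<bar> \<le> 7*h^3"
proof -
  have h2: "h^2 \<le> h/1000"
  proof -
    have "h*h \<le> h*(1/1000)" using h0 h1 by (intro mult_left_mono) auto
    then show ?thesis by (simp add: power2_eq_square)
  qed
  have h3: "h^3 \<le> h^2/1000"
  proof -
    have "h^2*h \<le> h^2*(1/1000)" using h0 h1 by (intro mult_left_mono) auto
    then show ?thesis by (simp add: power2_eq_square power3_eq_cube)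
  qed
  have hsq: "h^2 \<le> 1/1000000" using h2 h1 by simp
  have hcb: "h^3 \<le> 1/1000000000" using h3 hsq by simp
  define d where "d = 1 + t + k + dl"
  have dge: "d \<ge> (9979/10000)" unfolding d_def using ht hk hd h1 hsq hcb by (simp add: abs_le_iff; linarith)
  then have dabs: "\<bar>d\<bar> = d" by simp
  define s1 where "s1 = 3 + t + z"
  have s1lo: "s1 \<ge> (2997/1000)"
  proof (rule ccontr)
    assume "\<not> ?thesis"
    then have "s1 < (2997/1000)" by simp
    then have "s1^3 < (2997/1000)^3" using s1nn unfolding s1_def by (intro power_strict_mono) auto
    moreover have "s1^3 \<ge> 27 * d" using amgm dabs unfolding s1_def d_def by simp
    moreover have "((2997/1000)::real)^3 = 26919080973/1000000000" by (simp add: power3_eq_cube)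
    ultimately show False using dge by linarith
  qed
  have s1hi: "s1 \<le> 3 + 2*h"
  proof -
    have "s1^2 \<le> (3 + 2*h)^2"
    proof -
      have "s1^2 \<le> 3 * (3 + 2*t + h^2)" using cs unfolding s1_def .
      also have "\<dots> \<le> 9 + 12*h + 3*h^2" using ht by simp
      also have "\<dots> \<le> (3 + 2*h)^2" by (simp add: power2_eq_square algebra_simps)
      finally show ?thesis .
    qed
    then show ?thesis using h0 s1nn unfolding s1_def
      using abs_le_square_iff[of s1 "3+2*h"] by (simp add: s1_def)
  qed
  have zb: "\<bar>z\<bar> \<le> (5/1000)" using s1lo s1hi ht h1 unfolding s1_def by (simp add: abs_le_iff; linarith)
  define G where "G = u - z"
  define D where "D = 2 + t + z/2"
  define kap where "kap = 3 + 2*t + k"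
  have uR1: "u = (3+t)*z + z^2/2 - w" using R1 by (simp add: power2_eq_square algebra_simps)
  have GR: "G = z*(2+t) + z^2/2 - w" unfolding G_def uR1 by (simp add: algebra_simps)
  have Gb: "\<bar>G\<bar> \<le> (11/1000)"
  proof -
    have "\<bar>z*(2+t)\<bar> \<le> (5/1000) * (2002/1000)" using zb ht h1 by (intro abs_mul_le) auto
    moreover have "\<bar>z^2/2\<bar> \<le> 1/80000"
    proof -
      have "z^2 \<le> (5/1000)^2" using zb abs_le_square_iff[of z "5/1000"] by simp
      then show ?thesis by (simp add: power2_eq_square)
    qed
    moreover have "w \<le> 1/1000000" using hw hsq by simp
    ultimately have "\<bar>G\<bar> \<le> (5/1000) * (2002/1000) + 1/80000 + 1/1000000" unfolding GR using hw by (intro abs3) auto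
    then show ?thesis by simp
  qed
  have Db: "D \<ge> (1995/1000)" "D \<le> (2005/1000)" unfolding D_def using zb ht h1 by auto
  have zD: "z * D = G + w" unfolding D_def GR by (simp add: algebra_simps power2_eq_square)
  have key: "G * ((2*kap + G + 2*z)*D - 2*(d - kap)) = 2*(wc - w)*D + w*(z + 2*dl) - z^2*D"
  proof -
    have R2': "2*kap*u + u^2 = 2*wc + 2*z*d"
      using R2 dabs unfolding kap_def d_def by (simp add: power2_eq_square algebra_simps)
    have e1: "G*(2*kap + G + 2*z) = 2*wc + 2*z*(d - kap) - z^2"
      using R2' unfolding G_def by algebra
    have "G*(2*kap + G + 2*z)*D = 2*wc*D + 2*(d-kap)*(z*D) - z^2*D"
      using e1 by algebra
    also have "\<dots> = 2*wc*D + 2*(d-kap)*(G + w) - z^2*D" using zD by simp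
    finally have e2: "G*(2*kap + G + 2*z)*D = 2*wc*D + 2*(d-kap)*(G + w) - z^2*D" .
    have e3: "D + d - kap = z/2 + dl" unfolding D_def d_def kap_def by simp
    have "G * ((2*kap + G + 2*z)*D - 2*(d - kap)) = 2*wc*D + 2*(d-kap)*w - z^2*D"
      using e2 by algebra
    also have "2*wc*D + 2*(d-kap)*w = 2*(wc - w)*D + 2*w*(D + d - kap)" by (simp add: algebra_simps)
    also have "\<dots> = 2*(wc - w)*D + w*(z + 2*dl)" using e3 by algebra
    finally show ?thesis .
  qed
  define Cf where "Cf = (2*kap + G + 2*z)*D - 2*(d - kap)"
  have Cfb: "Cf \<ge> 15"
  proof -
    have a: "2*kap + G + 2*z \<ge> (597/100)" unfolding kap_def using ht hk Gb zb h1 hsq by (simp add: abs_le_iff; linarith)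
    have b: "(2*kap + G + 2*z)*D \<ge> (597/100) * (1995/1000)" using a Db by (intro mult_mono) auto
    have c: "- 2*(d - kap) \<ge> (399/100)" unfolding d_def kap_def using ht hd h1 hcb by (simp add: abs_le_iff; linarith)
    show ?thesis unfolding Cf_def using b c by simp
  qed
  have zle: "\<bar>z\<bar> \<le> \<bar>G\<bar> + h^2"
  proof -
    have "\<bar>z\<bar> * D = \<bar>z * D\<bar>" using Db by (simp add: abs_mult)
    also have "\<dots> = \<bar>G + w\<bar>" using zD by simp
    also have "\<dots> \<le> \<bar>G\<bar> + h^2" using hw by (simp add: abs_le_iff; linarith)
    finally have "\<bar>z\<bar> * D \<le> \<bar>G\<bar> + h^2" .
    moreover have "\<bar>z\<bar> \<le> \<bar>z\<bar> * D" using Db by (simp add: mult_le_cancel_left1)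
    ultimately show ?thesis by linarith
  qed
  have h4: "h^2*h^2 \<le> (1/1000)*h^3"
  proof -
    have "h^2*h^2 = h^3 * h" by (simp add: power2_eq_square power3_eq_cube)
    also have "\<dots> \<le> h^3 * (1/1000)" using h0 h1 by (intro mult_left_mono) auto
    finally show ?thesis by simp
  qed
  have h5: "h^2*(12*h^3) \<le> (1/1000)*h^3"
  proof -
    have "h^2*(12*h^3) = (12*h^2)*h^3" by simp
    also have "\<dots> \<le> (1/1000)*h^3" using hsq h0 by (intro mult_right_mono) auto
    finally show ?thesis .
  qed
  have Qb: "\<bar>2*(wc - w)*D + w*(z + 2*dl) - z^2*D\<bar> \<le> 101*h^3 + (225/10000)*\<bar>G\<bar>"
  proof -
    have a1: "\<bar>2*(wc - w)\<bar> \<le> 2*(25*h^3)" using hwc by simp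
    have a2: "\<bar>D\<bar> \<le> 2005/1000" using Db by simp
    have q1: "\<bar>2*(wc - w)*D\<bar> \<le> 2*(25*h^3)*(2005/1000)" using abs_mul_le[OF a1 a2] .
    have zz: "\<bar>z + 2*dl\<bar> \<le> \<bar>G\<bar> + h^2 + 12*h^3" using zle hd by (simp add: abs_le_iff; linarith)
    have a3: "\<bar>w\<bar> \<le> h^2" using hw by simp
    have q2: "\<bar>w*(z + 2*dl)\<bar> \<le> h^2 * (\<bar>G\<bar> + h^2 + 12*h^3)" using abs_mul_le[OF a3 zz] .
    have q2': "h^2 * (\<bar>G\<bar> + h^2 + 12*h^3) \<le> (1/1000000)*\<bar>G\<bar> + (2/1000) * h^3"
    proof -
      have "h^2 * \<bar>G\<bar> \<le> (1/1000000)*\<bar>G\<bar>" using hsq by (intro mult_right_mono) auto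
      moreover have "h^2 * (\<bar>G\<bar> + h^2 + 12*h^3) = h^2 * \<bar>G\<bar> + h^2*h^2 + h^2*(12*h^3)"
        by (simp add: algebra_simps)
      ultimately show ?thesis using h4 h5 by linarith
    qed
    have zsq: "z^2 \<le> (\<bar>G\<bar> + h^2)^2" using zle by (metis abs_ge_zero power2_abs power_mono)
    have zsq2: "(\<bar>G\<bar> + h^2)^2 \<le> (111/10000)*\<bar>G\<bar> + (1/1000)*h^3"
    proof -
      have "(\<bar>G\<bar> + h^2)^2 = \<bar>G\<bar>*\<bar>G\<bar> + (2*h^2)*\<bar>G\<bar> + h^2*h^2" by (simp add: power2_eq_square algebra_simps)
      moreover have "\<bar>G\<bar>*\<bar>G\<bar> \<le> (11/1000)*\<bar>G\<bar>" using Gb by (intro mult_right_mono) auto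
      moreover have "(2*h^2)*\<bar>G\<bar> \<le> (1/10000)*\<bar>G\<bar>" using hsq by (intro mult_right_mono) auto
      ultimately show ?thesis using h4 by linarith
    qed
    have a4: "\<bar>z^2\<bar> \<le> (111/10000)*\<bar>G\<bar> + (1/1000)*h^3" using zsq zsq2 by simp
    have q3: "\<bar>z^2*D\<bar> \<le> ((111/10000)*\<bar>G\<bar> + (1/1000)*h^3) * (2005/1000)" using abs_mul_le[OF a4 a2] .
    have tri: "\<bar>2*(wc - w)*D + w*(z + 2*dl) - z^2*D\<bar> \<le> \<bar>2*(wc - w)*D\<bar> + \<bar>w*(z + 2*dl)\<bar> + \<bar>z^2*D\<bar>"
      by (simp add: abs_le_iff; linarith)
    have q1': "\<bar>2*(wc - w)*D\<bar> \<le> (401/4)*h^3" using q1 by simp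
    have q3': "\<bar>z^2*D\<bar> \<le> (222555/10000000)*\<bar>G\<bar> + (2005/1000000)*h^3" using q3 by (simp add: algebra_simps)
    have "h^3 \<ge> 0" using h0 by simp
    then show ?thesis using tri q1' q2 q2' q3' abs_ge_zero[of G] by linarith
  qed
  have "15 * \<bar>G\<bar> \<le> Cf * \<bar>G\<bar>" using Cfb by (intro mult_right_mono) auto
  also have "\<dots> = \<bar>G\<bar> * Cf" by simp
  also have "\<dots> = \<bar>G * Cf\<bar>" using Cfb by (simp add: abs_mult)
  also have "\<dots> \<le> 101*h^3 + (225/10000)*\<bar>G\<bar>" using key Qb unfolding Cf_def by simp
  finally have "15 * \<bar>G\<bar> \<le> 101*h^3 + (225/10000)*\<bar>G\<bar>" .
  then have "\<bar>G\<bar> \<le> 7*h^3" using h0 by simp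
  then show ?thesis unfolding G_def .
qed


definition Wsk :: "mat3 \<Rightarrow> real" where
  "Wsk A = ((A$1$2 - A$2$1)^2 + (A$1$3 - A$3$1)^2 + (A$2$3 - A$3$2)^2) / 2"

definition kap3 :: "mat3 \<Rightarrow> real" where
  "kap3 A = A$1$1*A$2$2 - A$1$2*A$2$1 + A$1$1*A$3$3 - A$1$3*A$3$1 + A$2$2*A$3$3 - A$2$3*A$3$2"

lemma cof_full:
  "cof A $1$1 = A$2$2*A$3$3 - A$2$3*A$3$2"
  "cof A $1$2 = A$2$3*A$3$1 - A$2$1*A$3$3"
  "cof A $1$3 = A$2$1*A$3$2 - A$2$2*A$3$1"
  "cof A $2$1 = A$1$3*A$3$2 - A$1$2*A$3$3"
  "cof A $2$2 = A$1$1*A$3$3 - A$1$3*A$3$1"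
  "cof A $2$3 = A$1$2*A$3$1 - A$1$1*A$3$2"
  "cof A $3$1 = A$1$2*A$2$3 - A$1$3*A$2$2"
  "cof A $3$2 = A$1$3*A$2$1 - A$1$1*A$2$3"
  "cof A $3$3 = A$1$1*A$2$2 - A$1$2*A$2$1"
  unfolding cof_def det_3 by (simp_all add: algebra_simps)

lemma trace_cof: "trace (cof A) = kap3 A"
  unfolding trace3 cof_full kap3_def by simp

lemma E1_ident: "E1 A = (trace A)^2 - 2 * kap3 A + 2 * Wsk A"
  unfolding E1_def trace3 kap3_def Wsk_def by algebra

lemma E2_ident: "E2 A = (kap3 A)^2 - 2 * trace A * det A + 2 * Wsk (cof A)"
  unfolding E2_def trace3 kap3_def Wsk_def cof_full det_3 m2_def by (simp add: power2_eq_square; algebra)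

lemma amgm3:
  fixes a b c :: real
  assumes "a \<ge> 0" "b \<ge> 0" "c \<ge> 0"
  shows "(a+b+c)^3 \<ge> 27*(a*b*c)"
proof -
  have e: "(a+b+c)^3 - 27*(a*b*c) = (a+b+c)*((a-b)^2+(b-c)^2+(c-a)^2)/2 + 3*(a*(b-c)^2 + b*(a-c)^2 + c*(a-b)^2)"
    by algebra
  have "(a+b+c)*((a-b)^2+(b-c)^2+(c-a)^2)/2 \<ge> 0" using assms by simp
  moreover have "a*(b-c)^2 + b*(a-c)^2 + c*(a-b)^2 \<ge> 0" using assms by simp
  ultimately have "(a+b+c)^3 - 27*(a*b*c) \<ge> 0" unfolding e by (intro add_nonneg_nonneg) auto
  then show ?thesis by simp
qed

lemma sg_amgm: "is_sing_vals A s \<Longrightarrow> (sg1 s)^3 \<ge> 27 * sg3 s"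
  unfolding sg1_def sg3_def is_sing_vals_iff using amgm3 by auto

lemma sg_cs: "is_sing_vals A s \<Longrightarrow> (sg1 s)^2 \<le> 3 * E1 A"
proof -
  assume a: "is_sing_vals A s"
  have e: "3 * ((s$1)^2 + (s$2)^2 + (s$3)^2) - (sg1 s)^2 = (s$1 - s$2)^2 + (s$2 - s$3)^2 + (s$3 - s$1)^2"
    unfolding sg1_def by algebra
  have "(s$1 - s$2)^2 + (s$2 - s$3)^2 + (s$3 - s$1)^2 \<ge> 0" by simp
  then have "(sg1 s)^2 \<le> 3 * ((s$1)^2 + (s$2)^2 + (s$3)^2)" using e by linarith
  then show ?thesis using valid_coeffs(1)[OF a] by simp
qed


lemma entry_le: "\<bar>(H::mat3)$i$j\<bar> \<le> norm H"
  using component_le_norm_cart[of "H$i" j] Finite_Cartesian_Product.norm_nth_le[of H i] by simp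

lemma prod2_le: "\<bar>a::real\<bar> \<le> h \<Longrightarrow> \<bar>b\<bar> \<le> h \<Longrightarrow> \<bar>a*b\<bar> \<le> h^2"
  using abs_mul_le[of a h b h] by (simp add: power2_eq_square)

lemma prod3_le: "\<bar>a::real\<bar> \<le> h \<Longrightarrow> \<bar>b\<bar> \<le> h \<Longrightarrow> \<bar>c\<bar> \<le> h \<Longrightarrow> \<bar>a*b*c\<bar> \<le> h^3"
proof -
  assume a: "\<bar>a\<bar> \<le> h" "\<bar>b\<bar> \<le> h" "\<bar>c\<bar> \<le> h"
  have "\<bar>a*b\<bar> \<le> h^2" using prod2_le a by blast
  from abs_mul_le[OF this a(3)] show ?thesis by (simp add: power2_eq_square power3_eq_cube)
qed

lemma shift_ids:
  fixes H :: mat3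
  defines "B \<equiv> mat 1 + H"
  shows "trace B = 3 + trace H"
    "kap3 B = 3 + 2 * trace H + kap3 H"
    "det B = 1 + trace H + kap3 H + det H"
    "Wsk B = Wsk H"
    "E1 B = 3 + 2 * trace H + E1 H"
  unfolding B_def trace3 kap3_def det_3 Wsk_def E1_def
  by (simp_all add: mat_def power2_eq_square algebra_simps)

lemma shift_wc:
  fixes H :: mat3
  shows "Wsk (cof (mat 1 + H)) - Wsk H =
    ((2 * (H$1$2 - H$2$1) * (cof H$1$2 - cof H$2$1) + (cof H$1$2 - cof H$2$1)^2)
   + (2 * (H$1$3 - H$3$1) * (cof H$1$3 - cof H$3$1) + (cof H$1$3 - cof H$3$1)^2)
   + (2 * (H$2$3 - H$3$2) * (cof H$2$3 - cof H$3$2) + (cof H$2$3 - cof H$3$2)^2)) / 2"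
  unfolding Wsk_def cof_full by (simp add: mat_def; algebra)

lemma cofH_le: "\<bar>cof H $i$j\<bar> \<le> 2 * (norm H)^2"
proof -
  let ?h = "norm H"
  have e: "\<And>i j. \<bar>H$i$j\<bar> \<le> ?h" by (rule entry_le)
  have "\<bar>a*b - c*d\<bar> \<le> 2*?h^2" if "\<bar>a\<bar> \<le> ?h" "\<bar>b\<bar> \<le> ?h" "\<bar>c\<bar> \<le> ?h" "\<bar>d\<bar> \<le> ?h" for a b c d
    using prod2_le[OF that(1,2)] prod2_le[OF that(3,4)] by (simp add: abs_le_iff; linarith)
  note * = this[OF e e e e]
  show ?thesis using exhaust_3[of i] exhaust_3[of j] by (auto simp: cof_full *)
qed

lemma lin9: "(p::real) \<le> 2*(a12+a21) \<Longrightarrow> q \<le> 2*(a13+a31) \<Longrightarrow> r \<le> 2*(a23+a32) \<Longrightarrow>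
   0 \<le> a11 \<Longrightarrow> 0 \<le> a22 \<Longrightarrow> 0 \<le> a33 \<Longrightarrow>
   (p+q+r)/2 \<le> a11 + a12 + a13 + a21 + a22 + a23 + a31 + a32 + a33"
proof -
  assume "p \<le> 2*(a12+a21)" "q \<le> 2*(a13+a31)" "r \<le> 2*(a23+a32)" "0 \<le> a11" "0 \<le> a22" "0 \<le> a33"
  then have "p+q+r \<le> 2*(a11 + a12 + a13 + a21 + a22 + a23 + a31 + a32 + a33)" by (simp add: algebra_simps; linarith)
  then show ?thesis by simp
qed

lemma abs_avg3: "(d::real) = (X+Y+Z)/2 \<Longrightarrow> \<bar>X\<bar> \<le> M \<Longrightarrow> \<bar>Y\<bar> \<le> M \<Longrightarrow> \<bar>Z\<bar> \<le> M \<Longrightarrow> \<bar>d\<bar> \<le> 3*M/2"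
  by (simp add: abs_le_iff; linarith)

lemma G1_cubic:
  fixes B :: mat3
  assumes hs: "norm (B - mat 1) \<le> 1/1000"
  shows "\<bar>Gfun 1 B\<bar> \<le> 7 * (norm (B - mat 1))^3"
proof -
  define H where "H = B - mat 1"
  have BH: "B = mat 1 + H" unfolding H_def by simp
  define h where "h = norm H"
  have h0: "0 \<le> h" unfolding h_def by simp
  have e: "\<And>i j. \<bar>H$i$j\<bar> \<le> h" unfolding h_def by (rule entry_le)
  have hE: "h^2 = E1 H" unfolding h_def norm_mat3 using E1_nonneg by simp
  define t where "t = trace H"
  define k where "k = kap3 H"
  define dl where "dl = det H"
  define w where "w = Wsk H"
  define wc where "wc = Wsk (cof B)"
  have ht: "\<bar>t\<bar> \<le> 2*h"
  proof -
    have "t^2 \<le> 3 * ((H$1$1)^2 + (H$2$2)^2 + (H$3$3)^2)"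
    proof -
      have "3 * ((H$1$1)^2 + (H$2$2)^2 + (H$3$3)^2) - t^2 = (H$1$1 - H$2$2)^2 + (H$2$2 - H$3$3)^2 + (H$3$3 - H$1$1)^2"
        unfolding t_def trace3 by algebra
      moreover have "(H$1$1 - H$2$2)^2 + (H$2$2 - H$3$3)^2 + (H$3$3 - H$1$1)^2 \<ge> 0" by simp
      ultimately show ?thesis by linarith
    qed
    also have "\<dots> \<le> 3 * h^2" unfolding hE E1_def by simp
    also have "\<dots> \<le> (2*h)^2" by (simp add: power2_eq_square)
    finally show ?thesis using h0 abs_le_square_iff[of t "2*h"] by simp
  qed
  have hk: "\<bar>k\<bar> \<le> 6*h^2"
  proof -
    have p: "\<And>i j i' j'. \<bar>H$i$j * H$i'$j'\<bar> \<le> h^2" using prod2_le e by blast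
    show ?thesis unfolding k_def kap3_def using p[of 1 1 2 2] p[of 1 2 2 1] p[of 1 1 3 3] p[of 1 3 3 1] p[of 2 2 3 3] p[of 2 3 3 2]
      by (simp add: abs_le_iff; linarith)
  qed
  have hd: "\<bar>dl\<bar> \<le> 6*h^3"
  proof -
    have p: "\<And>i j i' j' i'' j''. \<bar>H$i$j * H$i'$j' * H$i''$j''\<bar> \<le> h^3" using prod3_le e by blast
    show ?thesis unfolding dl_def det_3
      using p[of 1 1 2 2 3 3] p[of 1 2 2 3 3 1] p[of 1 3 2 1 3 2] p[of 1 1 2 3 3 2] p[of 1 2 2 1 3 3] p[of 1 3 2 2 3 1]
      by (simp add: abs_le_iff; linarith)
  qed
  have hw: "0 \<le> w" "w \<le> h^2"
  proof -
    show "0 \<le> w" unfolding w_def Wsk_def by simp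
    have "\<And>a b::real. (a - b)^2 \<le> 2*(a^2 + b^2)"
    proof -
      fix a b :: real
      have "2*(a^2 + b^2) - (a-b)^2 = (a+b)^2" by algebra
      moreover have "(a+b)^2 \<ge> 0" by simp
      ultimately show "(a - b)^2 \<le> 2*(a^2 + b^2)" by linarith
    qed
    note q = this
    show "w \<le> h^2" unfolding w_def Wsk_def hE E1_def
      by (rule lin9[OF q[of "H$1$2" "H$2$1"] q[of "H$1$3" "H$3$1"] q[of "H$2$3" "H$3$2"]]) simp_all
  qed
  have hwc: "\<bar>wc - w\<bar> \<le> 25*h^3"
  proof -
    have ch: "\<And>i j. \<bar>cof H$i$j\<bar> \<le> 2*h^2" unfolding h_def by (rule cofH_le)
    have trm: "\<bar>2*(H$i$j - H$j$i)*(cof H$i$j - cof H$j$i) + (cof H$i$j - cof H$j$i)^2\<bar> \<le> 16*h^3 + 16*h^4" for i j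
    proof -
      have a: "\<bar>2*(H$i$j - H$j$i)\<bar> \<le> 4*h" using e[of i j] e[of j i] by (simp add: abs_le_iff; linarith)
      have b: "\<bar>cof H$i$j - cof H$j$i\<bar> \<le> 4*h^2" using ch[of i j] ch[of j i] by (simp add: abs_le_iff; linarith)
      have ab: "\<bar>2*(H$i$j - H$j$i)*(cof H$i$j - cof H$j$i)\<bar> \<le> 4*h*(4*h^2)" using abs_mul_le[OF a b] .
      have bb: "\<bar>(cof H$i$j - cof H$j$i)^2\<bar> \<le> (4*h^2)^2"
        using b by (metis abs_ge_zero abs_power2 power2_abs power_mono)
      have "4*h*(4*h^2) = 16*h^3" by (simp add: power2_eq_square power3_eq_cube)
      moreover have "(4*h^2)^2 = 16*h^4" by (simp add: power2_eq_square power4_eq_xxxx)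
      ultimately show ?thesis using ab bb by (simp add: abs_le_iff; linarith)
    qed
    have "wc - w = ((2 * (H$1$2 - H$2$1) * (cof H$1$2 - cof H$2$1) + (cof H$1$2 - cof H$2$1)^2)
   + (2 * (H$1$3 - H$3$1) * (cof H$1$3 - cof H$3$1) + (cof H$1$3 - cof H$3$1)^2)
   + (2 * (H$2$3 - H$3$2) * (cof H$2$3 - cof H$3$2) + (cof H$2$3 - cof H$3$2)^2)) / 2"
      unfolding wc_def w_def BH by (rule shift_wc)
    then have "\<bar>wc - w\<bar> \<le> 3*(16*h^3 + 16*h^4)/2"
      by (rule abs_avg3[OF _ trm[of 1 2] trm[of 1 3] trm[of 2 3]])
    moreover have "h^4 \<le> h^3 / 1000"
    proof -
      have "h^3 * h \<le> h^3 * (1/1000)" using h0 hs unfolding h_def H_def by (intro mult_left_mono) auto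
      then show ?thesis by (simp add: power3_eq_cube power4_eq_xxxx)
    qed
    moreover have "h^3 \<ge> 0" using h0 by simp
    moreover have "3*(16*h^3 + 16*h^4)/2 = 24*h^3 + 24*h^4" by simp
    ultimately show ?thesis by linarith
  qed
  obtain s where s: "is_sing_vals B s" using sing_vals_exist by blast
  define z where "z = sg1 s - trace B"
  define u where "u = sg2 s - kap3 B"
  note ids = shift_ids[of H, folded BH]
  have Geq: "Gfun 1 B = u - z"
    unfolding Gfun_def Pfun_valid[OF s] Nfun_def trace_cof u_def z_def by simp
  have s1: "sg1 s = 3 + t + z" unfolding z_def ids t_def by simp
  have s2: "sg2 s = 3 + 2*t + k + u" unfolding u_def ids t_def k_def by simp
  have dB: "det B = 1 + t + k + dl" unfolding ids t_def k_def dl_def by simp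
  note V = valid_rels[OF s]
  have "\<bar>u - z\<bar> \<le> 7*h^3"
  proof (rule core_cubic[of h t k dl w wc z u])
    show "0 \<le> h" by (rule h0)
    show "h \<le> 1/1000" using hs unfolding h_def H_def .
    show "\<bar>t\<bar> \<le> 2*h" by (rule ht)
    show "\<bar>k\<bar> \<le> 6*h^2" by (rule hk)
    show "\<bar>dl\<bar> \<le> 6*h^3" by (rule hd)
    show "0 \<le> w" "w \<le> h^2" by (rule hw)+
    show "\<bar>wc - w\<bar> \<le> 25*h^3" by (rule hwc)
    show "3 + t + z \<ge> 0" using V(4) s1 by simp
    show "(3 + t + z)^3 \<ge> 27 * \<bar>1 + t + k + dl\<bar>" using sg_amgm[OF s] V(3) s1 dB by simp
    show "(3 + t + z)^2 \<le> 3 * (3 + 2*t + h^2)" using sg_cs[OF s] s1 ids(5) hE t_def by simp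
    show "(3+t+z)^2 = (3+t)^2 - 2*(3 + 2*t + k) + 2*w + 2*(3 + 2*t + k + u)"
      using V(1) E1_ident[of B] ids s1 s2 unfolding t_def k_def w_def by simp
    show "(3 + 2*t + k + u)^2 = (3+2*t+k)^2 - 2*(3+t)*(1+t+k+dl) + 2*wc + 2*(3+t+z)*\<bar>1+t+k+dl\<bar>"
      using V(2) V(3) E2_ident[of B] ids s1 s2 dB unfolding t_def k_def wc_def by simp
  qed
  then show ?thesis using Geq unfolding h_def H_def by simp
qed


lemma E1_scale: "E1 (c *\<^sub>R A) = c^2 * E1 A"
  unfolding E1_def by (simp add: power_mult_distrib algebra_simps)
lemma E2_scale: "E2 (c *\<^sub>R A) = c^4 * E2 A"
  unfolding E2_def m2_def by (simp add: power2_eq_square power4_eq_xxxx algebra_simps)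
lemma det_scale: "det (c *\<^sub>R (A::mat3)) = c^3 * det A"
  unfolding det_3 by (simp add: power3_eq_cube algebra_simps)
lemma kap3_scale: "kap3 (c *\<^sub>R A) = c^2 * kap3 A"
  unfolding kap3_def by (simp add: power2_eq_square algebra_simps)
lemma trace_scale: "trace (c *\<^sub>R (A::mat3)) = c * trace A"
  unfolding trace3 by (simp add: algebra_simps)

lemma sing_scale:
  assumes c: "c > 0" and s: "is_sing_vals A s"
  shows "is_sing_vals (c *\<^sub>R A) (c *\<^sub>R s)"
  unfolding is_sing_vals_iff
proof (intro conjI allI)
  fix i show "(c *\<^sub>R s)$i \<ge> 0" using s c unfolding is_sing_vals_iff by simp
next
  fix x
  define y where "y = x / c^2"
  have xy: "x = c^2 * y" unfolding y_def using c by simp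
  have hy: "y^3 - E1 A * y^2 + E2 A * y - (det A)^2 = (y - (s$1)^2) * (y - (s$2)^2) * (y - (s$3)^2)"
    using s unfolding is_sing_vals_iff by blast
  show "x^3 - E1 (c *\<^sub>R A) * x^2 + E2 (c *\<^sub>R A) * x - (det (c *\<^sub>R A))^2 =
    (x - ((c *\<^sub>R s)$1)^2) * (x - ((c *\<^sub>R s)$2)^2) * (x - ((c *\<^sub>R s)$3)^2)"
    unfolding E1_scale E2_scale det_scale xy using hy by simp algebra
qed

lemma Gfun_scale:
  assumes c: "c > 0"
  shows "Gfun (c * lam) (c *\<^sub>R A) = c^2 * Gfun lam A"
proof -
  obtain s where s: "is_sing_vals A s" using sing_vals_exist by blast
  have s': "is_sing_vals (c *\<^sub>R A) (c *\<^sub>R s)" by (rule sing_scale[OF c s])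
  show ?thesis
    unfolding Gfun_def Pfun_valid[OF s] Pfun_valid[OF s'] Nfun_def trace_cof kap3_scale trace_scale
    unfolding sg1_def sg2_def by (simp add: power2_eq_square algebra_simps)
qed

lemma Gfun_cubic:
  assumes lam: "lam > 0" and hs: "norm (A - lam *\<^sub>R mat 1) \<le> lam/1000"
  shows "\<bar>Gfun lam A\<bar> \<le> 7 * (norm (A - lam *\<^sub>R mat 1))^3 / lam"
proof -
  define B where "B = (1/lam) *\<^sub>R A"
  have AB: "A = lam *\<^sub>R B" unfolding B_def using lam by simp
  have BI: "B - mat 1 = (1/lam) *\<^sub>R (A - lam *\<^sub>R mat 1)"
    unfolding B_def using lam by (simp add: algebra_simps)
  have nB: "norm (B - mat 1) = norm (A - lam *\<^sub>R mat 1) / lam"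
    unfolding BI using lam by simp
  have "norm (B - mat 1) \<le> 1/1000" unfolding nB using hs lam by (simp add: divide_le_eq)
  then have g1: "\<bar>Gfun 1 B\<bar> \<le> 7 * (norm (B - mat 1))^3" by (rule G1_cubic)
  have "Gfun lam A = lam^2 * Gfun 1 B" unfolding AB using Gfun_scale[OF lam, of 1 B] by simp
  then have "\<bar>Gfun lam A\<bar> = lam^2 * \<bar>Gfun 1 B\<bar>" by (simp add: abs_mult)
  also have "\<dots> \<le> lam^2 * (7 * (norm (A - lam *\<^sub>R mat 1) / lam)^3)"
    using g1 unfolding nB by (intro mult_left_mono) auto
  also have "\<dots> = 7 * (norm (A - lam *\<^sub>R mat 1))^3 / lam"
    using lam by (simp add: power3_eq_cube power2_eq_square field_simps)
  finally show ?thesis .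
qed

lemma norm_mat1: "norm (mat 1 :: mat3) = sqrt 3"
  unfolding norm_mat3 E1_def by (simp add: mat_def)

lemma Gfun_quad:
  assumes lam: "lam \<ge> 0"
  shows "\<bar>Gfun lam A\<bar> \<le> 2 * (norm A)^2 + 4 * lam * norm A"
proof -
  obtain s where s: "is_sing_vals A s" using sing_vals_exist by blast
  note V = valid_rels[OF s]
  define n where "n = norm A"
  have n0: "n \<ge> 0" unfolding n_def by simp
  have nE: "n^2 = E1 A" unfolding n_def norm_mat3 using E1_nonneg by simp
  have s1: "sg1 s \<le> 2*n"
  proof -
    have "(sg1 s)^2 \<le> (2*n)^2" using sg_cs[OF s] nE E1_nonneg[of A] by (simp add: power2_eq_square)
    then show ?thesis using power2_le_imp_le[of "sg1 s" "2*n"] n0 by simp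
  qed
  have s2: "sg2 s \<le> n^2"
  proof -
    have "E1 A + 2 * sg2 s \<le> 3 * E1 A" using sg_cs[OF s] V(1) by simp
    then show ?thesis using nE by simp
  qed
  have tr: "\<bar>trace A\<bar> \<le> 2*n"
  proof -
    have "(trace A)^2 \<le> 3 * ((A$1$1)^2 + (A$2$2)^2 + (A$3$3)^2)"
    proof -
      have "3 * ((A$1$1)^2 + (A$2$2)^2 + (A$3$3)^2) - (trace A)^2 = (A$1$1 - A$2$2)^2 + (A$2$2 - A$3$3)^2 + (A$3$3 - A$1$1)^2"
        unfolding trace3 by algebra
      moreover have "(A$1$1 - A$2$2)^2 + (A$2$2 - A$3$3)^2 + (A$3$3 - A$1$1)^2 \<ge> 0" by simp
      ultimately show ?thesis by linarith
    qed
    also have "\<dots> \<le> 3 * n^2" unfolding nE E1_def by simp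
    also have "\<dots> \<le> (2*n)^2" by (simp add: power2_eq_square)
    finally show ?thesis using n0 abs_le_square_iff[of "trace A" "2*n"] by simp
  qed
  have kp: "\<bar>kap3 A\<bar> \<le> n^2"
  proof -
    have m: "\<bar>a*d - b*c\<bar> \<le> (a^2 + d^2 + b^2 + c^2)/2" for a b c d :: real
    proof -
      have "(a^2 + d^2 + b^2 + c^2) - 2*(a*d - b*c) = (a-d)^2 + (b+c)^2" by algebra
      moreover have "(a^2 + d^2 + b^2 + c^2) + 2*(a*d - b*c) = (a+d)^2 + (b-c)^2" by algebra
      moreover have "(a-d)^2 + (b+c)^2 \<ge> 0" "(a+d)^2 + (b-c)^2 \<ge> 0" by simp_all
      ultimately show ?thesis by (simp add: abs_le_iff; linarith)
    qed
    have "\<bar>kap3 A\<bar> \<le> \<bar>A$1$1*A$2$2 - A$1$2*A$2$1\<bar> + \<bar>A$1$1*A$3$3 - A$1$3*A$3$1\<bar> + \<bar>A$2$2*A$3$3 - A$2$3*A$3$2\<bar>"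
      unfolding kap3_def by (simp add: abs_le_iff; linarith)
    also have "\<dots> \<le> ((A$1$1)^2 + (A$2$2)^2 + (A$1$2)^2 + (A$2$1)^2)/2 + ((A$1$1)^2 + (A$3$3)^2 + (A$1$3)^2 + (A$3$1)^2)/2
        + ((A$2$2)^2 + (A$3$3)^2 + (A$2$3)^2 + (A$3$2)^2)/2"
      using m[of "A$1$1" "A$2$2" "A$1$2" "A$2$1"] m[of "A$1$1" "A$3$3" "A$1$3" "A$3$1"] m[of "A$2$2" "A$3$3" "A$2$3" "A$3$2"]
      by linarith
    also have "\<dots> \<le> n^2" unfolding nE E1_def by (simp add: field_simps)
    finally show ?thesis .
  qed
  have "\<bar>Gfun lam A\<bar> \<le> sg2 s + lam * sg1 s + \<bar>kap3 A\<bar> + lam * \<bar>trace A\<bar>"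
  proof -
    have g: "\<bar>a - b - (k - c)\<bar> \<le> a + b + \<bar>k\<bar> + \<bar>c\<bar>" if "a \<ge> 0" "b \<ge> 0" for a b k c :: real
      using that by (simp add: abs_le_iff; linarith)
    have "\<bar>Gfun lam A\<bar> \<le> sg2 s + lam * sg1 s + \<bar>kap3 A\<bar> + \<bar>lam * trace A\<bar>"
      unfolding Gfun_def Pfun_valid[OF s] Nfun_def trace_cof using V(4) V(5) lam by (intro g) auto
    then show ?thesis using lam by (simp add: abs_mult)
  qed
  also have "\<dots> \<le> n^2 + lam*(2*n) + n^2 + lam*(2*n)"
    using s1 s2 tr kp lam by (intro add_mono mult_left_mono) auto
  finally show ?thesis unfolding n_def by (simp add: algebra_simps)
qed

lemma Gfun_quad2:
  assumes lam: "lam \<ge> 0"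
  shows "\<bar>Gfun lam A\<bar> \<le> 2 * (norm (A - lam *\<^sub>R mat 1) + 2*lam)^2 + 4 * lam * (norm (A - lam *\<^sub>R mat 1) + 2*lam)"
proof -
  have "norm A \<le> norm (A - lam *\<^sub>R mat 1) + norm (lam *\<^sub>R (mat 1::mat3))"
    using norm_triangle_ineq[of "A - lam *\<^sub>R mat 1" "lam *\<^sub>R mat 1"] by simp
  also have "norm (lam *\<^sub>R (mat 1::mat3)) \<le> 2*lam"
  proof -
    have "sqrt 3 \<le> sqrt (4::real)" by (rule real_sqrt_le_mono) simp
    then have "sqrt 3 \<le> (2::real)" by simp
    then show ?thesis using lam unfolding norm_scaleR norm_mat1 by (simp add: mult_left_mono mult.commute)
  qed
  finally have nA: "norm A \<le> norm (A - lam *\<^sub>R mat 1) + 2*lam" by simp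
  have "\<bar>Gfun lam A\<bar> \<le> 2 * (norm A)^2 + 4 * lam * norm A" by (rule Gfun_quad[OF lam])
  also have "\<dots> \<le> 2 * (norm (A - lam *\<^sub>R mat 1) + 2*lam)^2 + 4 * lam * (norm (A - lam *\<^sub>R mat 1) + 2*lam)"
    using nA lam by (intro add_mono mult_left_mono power_mono) auto
  finally show ?thesis .
qed


definition Wit :: "real \<Rightarrow> real \<Rightarrow> real \<Rightarrow> mat3" where
  "Wit lam eta eps = vector [vector [lam, eta, 0], vector [0, lam, 0], vector [0, 0, lam + eps]]"

lemma Wit_entries:
  "Wit lam eta eps $1$1 = lam" "Wit lam eta eps $1$2 = eta" "Wit lam eta eps $1$3 = 0"
  "Wit lam eta eps $2$1 = 0" "Wit lam eta eps $2$2 = lam" "Wit lam eta eps $2$3 = 0"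
  "Wit lam eta eps $3$1 = 0" "Wit lam eta eps $3$2 = 0" "Wit lam eta eps $3$3 = lam + eps"
  unfolding Wit_def by simp_all

lemma Wit_norm: "norm (Wit lam eta eps - lam *\<^sub>R mat 1) = sqrt (eta^2 + eps^2)"
  unfolding norm_mat3 E1_def by (simp add: Wit_entries mat_def)

lemma Wit_G:
  assumes lam: "lam \<ge> 0" and eta: "eta \<ge> 0" and eps: "eps \<ge> 0"
  shows "Gfun lam (Wit lam eta eps) = eps * (sqrt (4*lam^2 + eta^2) - 2*lam)"
proof -
  define S where "S = sqrt (4*lam^2 + eta^2)"
  have SS: "S^2 = 4*lam^2 + eta^2" unfolding S_def by simp
  have Se: "S \<ge> eta"
  proof -
    have "eta^2 \<le> 4*lam^2 + eta^2" by simp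
    then show ?thesis unfolding S_def by (rule real_le_rsqrt)
  qed
  define a where "a = (S + eta)/2"
  define b where "b = (S - eta)/2"
  have ab: "a + b = S" "a - b = eta" unfolding a_def b_def by (simp_all add: field_simps)
  have abl: "a * b = lam^2"
  proof -
    have "4*(a*b) = (a+b)^2 - (a-b)^2" by algebra
    also have "\<dots> = 4*lam^2" unfolding ab using SS by simp
    finally show ?thesis by simp
  qed
  have a2b2: "a^2 + b^2 = 2*lam^2 + eta^2"
  proof -
    have "2*(a^2 + b^2) = (a+b)^2 + (a-b)^2" by algebra
    also have "\<dots> = 2*(2*lam^2 + eta^2)" unfolding ab using SS by simp
    finally show ?thesis by simp
  qed
  define s :: "real^3" where "s = vector [a, b, lam + eps]"
  have s: "is_sing_vals (Wit lam eta eps) s"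
    unfolding is_sing_vals_iff
  proof (intro conjI allI)
    fix i show "s$i \<ge> 0" using exhaust_3[of i] Se eta eps lam unfolding s_def a_def b_def by auto
  next
    fix x
    show "x^3 - E1 (Wit lam eta eps) * x^2 + E2 (Wit lam eta eps) * x - (det (Wit lam eta eps))^2
       = (x - (s$1)^2) * (x - (s$2)^2) * (x - (s$3)^2)"
      unfolding E1_def E2_def m2_def det_3 Wit_entries s_def using abl a2b2 by simp algebra
  qed
  show ?thesis
    unfolding Gfun_def Pfun_valid[OF s] Nfun_def trace3 cof_full Wit_entries sg1_def sg2_def s_def S_def[symmetric]
    using abl by (simp add: ab(1)[symmetric] algebra_simps power2_eq_square)
qed

lemma Wit_pos:
  assumes lam: "lam > 0" and eta: "eta > 0" and eps: "eps > 0"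
  shows "Gfun lam (Wit lam eta eps) > 0"
proof -
  have "sqrt (4*lam^2) < sqrt (4*lam^2 + eta^2)" using eta by simp
  moreover have "sqrt (4*lam^2) = 2*lam" using lam by (simp add: real_sqrt_mult)
  ultimately show ?thesis unfolding Wit_G[OF less_imp_le[OF lam] less_imp_le[OF eta] less_imp_le[OF eps]]
    using eps by simp
qed


lemma valid_from_coeffs:
  assumes "\<forall>i. s$i \<ge> 0" "(s$1)^2 + (s$2)^2 + (s$3)^2 = E1 A"
    "(s$1)^2*(s$2)^2 + (s$1)^2*(s$3)^2 + (s$2)^2*(s$3)^2 = E2 A"
    "(s$1)^2*(s$2)^2*(s$3)^2 = (det A)^2"
  shows "is_sing_vals A s"
  unfolding is_sing_vals_iff
proof (intro conjI allI)
  fix i show "s$i \<ge> 0" using assms(1) by simp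
next
  fix x show "x^3 - E1 A * x^2 + E2 A * x - (det A)^2 = (x - (s$1)^2) * (x - (s$2)^2) * (x - (s$3)^2)"
    unfolding assms(2,3,4)[symmetric] by algebra
qed

lemma entry_tendsto: "(X \<longlongrightarrow> A) F \<Longrightarrow> ((\<lambda>n. X n $ i $ j) \<longlongrightarrow> (A::mat3) $ i $ j) F"
  by (intro tendsto_vec_nth)

lemma E1_tendsto: "(X \<longlongrightarrow> A) F \<Longrightarrow> ((\<lambda>n. E1 (X n)) \<longlongrightarrow> E1 A) F"
  unfolding E1_def by (intro tendsto_intros entry_tendsto)
lemma E2_tendsto: "(X \<longlongrightarrow> A) F \<Longrightarrow> ((\<lambda>n. E2 (X n)) \<longlongrightarrow> E2 A) F"
  unfolding E2_def m2_def by (intro tendsto_intros entry_tendsto)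
lemma det_tendsto: "(X \<longlongrightarrow> A) F \<Longrightarrow> ((\<lambda>n. det (X n)) \<longlongrightarrow> det (A::mat3)) F"
  unfolding det_3 by (intro tendsto_intros entry_tendsto)

definition Fs :: "mat3 \<Rightarrow> real" where "Fs A = sg1 (sing_vals A)"

lemma Fs_bounds: "0 \<le> Fs A" "Fs A \<le> 2 * norm A"
proof -
  have s: "is_sing_vals A (sing_vals A)" by (rule sing_vals_valid)
  note V = valid_rels[OF s]
  show "0 \<le> Fs A" unfolding Fs_def using V(4) .
  have nE: "(norm A)^2 = E1 A" unfolding norm_mat3 using E1_nonneg by simp
  have "(Fs A)^2 \<le> (2*norm A)^2" unfolding Fs_def using sg_cs[OF s] nE E1_nonneg[of A]
    by (simp add: power2_eq_square)
  then show "Fs A \<le> 2 * norm A" using power2_le_imp_le[of "Fs A" "2*norm A"] by simp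
qed

lemma sv_norm: "is_sing_vals A s \<Longrightarrow> norm s = norm A"
proof -
  assume s: "is_sing_vals A s"
  have "norm s = sqrt ((s$1)^2 + (s$2)^2 + (s$3)^2)"
    by (simp add: norm_vec_def L2_set_def sum_3 real_norm_def)
  also have "\<dots> = norm A" unfolding valid_coeffs(1)[OF s] norm_mat3 ..
  finally show ?thesis .
qed

lemma Fs_closed_graph:
  "closed ((\<lambda>A. (A, Fs A)) ` cball (0::mat3) R)"
  unfolding closed_sequential_limits
proof (intro allI impI, elim conjE)
  fix x :: "nat \<Rightarrow> mat3 \<times> real" and l
  assume xin: "\<forall>n. x n \<in> (\<lambda>A. (A, Fs A)) ` cball 0 R" and lim: "x \<longlonglongrightarrow> l"
  define A where "A = (\<lambda>n. fst (x n))"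
  have xA: "x n = (A n, Fs (A n))" for n
  proof -
    obtain B where "x n = (B, Fs B)" using xin by blast
    then show ?thesis unfolding A_def by simp
  qed
  have AR: "A n \<in> cball 0 R" for n
  proof -
    obtain B where "B \<in> cball 0 R" "x n = (B, Fs B)" using xin by blast
    then show ?thesis unfolding A_def by simp
  qed
  have Alim: "A \<longlonglongrightarrow> fst l" unfolding A_def by (intro tendsto_fst lim)
  have Flim: "(\<lambda>n. Fs (A n)) \<longlonglongrightarrow> snd l" using tendsto_snd[OF lim] xA by simp
  have lR: "fst l \<in> cball 0 R"
  proof -
    have cl: "closed (cball (0::mat3) R)" by simp
    from cl[unfolded closed_sequential_limits] AR Alim show ?thesis by blast
  qed
  define s where "s = (\<lambda>n. sing_vals (A n))"
  have sv: "is_sing_vals (A n) (s n)" for n unfolding s_def by (rule sing_vals_valid)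
  have sR: "s n \<in> cball 0 R" for n using AR[of n] sv_norm[OF sv[of n]] by simp
  obtain t r where t: "t \<in> cball 0 R" "strict_mono r" "(s \<circ> r) \<longlonglongrightarrow> t"
    using seq_compactE[OF compact_imp_seq_compact[OF compact_cball[of "0::real^3" R]]] sR by metis
  have Ar: "(A \<circ> r) \<longlonglongrightarrow> fst l" by (rule LIMSEQ_subseq_LIMSEQ[OF Alim t(2)])
  have sc: "(\<lambda>n. s (r n) $ i) \<longlonglongrightarrow> t $ i" for i
    using tendsto_vec_nth[OF t(3)] by (simp add: o_def)
  have tv: "is_sing_vals (fst l) t"
  proof (rule valid_from_coeffs)
    show "\<forall>i. t$i \<ge> 0"
    proof
      fix i
      have "\<forall>n. s (r n) $ i \<ge> 0" using sv unfolding is_sing_vals_iff by blast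
      then show "t$i \<ge> 0" using LIMSEQ_le_const[OF sc[of i]] by blast
    qed
    have c: "\<And>n. (s (r n)$1)^2 + (s (r n)$2)^2 + (s (r n)$3)^2 = E1 (A (r n))"
        "\<And>n. (s (r n)$1)^2*(s (r n)$2)^2 + (s (r n)$1)^2*(s (r n)$3)^2 + (s (r n)$2)^2*(s (r n)$3)^2 = E2 (A (r n))"
        "\<And>n. (s (r n)$1)^2*(s (r n)$2)^2*(s (r n)$3)^2 = (det (A (r n)))^2"
      using valid_coeffs[OF sv] by blast+
    have l1: "(\<lambda>n. E1 (A (r n))) \<longlonglongrightarrow> E1 (fst l)" using E1_tendsto[OF Ar] by (simp add: o_def)
    have l2: "(\<lambda>n. E2 (A (r n))) \<longlonglongrightarrow> E2 (fst l)" using E2_tendsto[OF Ar] by (simp add: o_def)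
    have l3: "(\<lambda>n. (det (A (r n)))^2) \<longlonglongrightarrow> (det (fst l))^2" using det_tendsto[OF Ar] by (intro tendsto_intros) (simp add: o_def)
    have m1: "(\<lambda>n. (s (r n)$1)^2 + (s (r n)$2)^2 + (s (r n)$3)^2) \<longlonglongrightarrow> (t$1)^2 + (t$2)^2 + (t$3)^2"
      by (intro tendsto_intros sc)
    have m2: "(\<lambda>n. (s (r n)$1)^2*(s (r n)$2)^2 + (s (r n)$1)^2*(s (r n)$3)^2 + (s (r n)$2)^2*(s (r n)$3)^2)
       \<longlonglongrightarrow> (t$1)^2*(t$2)^2 + (t$1)^2*(t$3)^2 + (t$2)^2*(t$3)^2"
      by (intro tendsto_intros sc)
    have m3: "(\<lambda>n. (s (r n)$1)^2*(s (r n)$2)^2*(s (r n)$3)^2) \<longlonglongrightarrow> (t$1)^2*(t$2)^2*(t$3)^2"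
      by (intro tendsto_intros sc)
    show "(t$1)^2 + (t$2)^2 + (t$3)^2 = E1 (fst l)" using LIMSEQ_unique[OF m1] l1 c(1) by simp
    show "(t$1)^2*(t$2)^2 + (t$1)^2*(t$3)^2 + (t$2)^2*(t$3)^2 = E2 (fst l)" using LIMSEQ_unique[OF m2] l2 c(2) by simp
    show "(t$1)^2*(t$2)^2*(t$3)^2 = (det (fst l))^2" using LIMSEQ_unique[OF m3] l3 c(3) by simp
  qed
  have "Fs (fst l) = sg1 t" unfolding Fs_def using sing_unique[OF sing_vals_valid tv] by simp
  moreover have "(\<lambda>n. Fs (A (r n))) \<longlonglongrightarrow> sg1 t"
  proof -
    have st: "(\<lambda>n. sing_vals (A (r n))) \<longlonglongrightarrow> t" using t(3) by (simp add: s_def o_def)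
    show ?thesis unfolding Fs_def sg1_def by (intro tendsto_intros st)
  qed
  moreover have "(\<lambda>n. Fs (A (r n))) \<longlonglongrightarrow> snd l"
    using LIMSEQ_subseq_LIMSEQ[OF Flim t(2)] by (simp add: o_def)
  ultimately have "snd l = Fs (fst l)" using LIMSEQ_unique by metis
  then have l: "l = (\<lambda>A. (A, Fs A)) (fst l)" by (cases l) simp
  show "l \<in> (\<lambda>A. (A, Fs A)) ` cball 0 R" by (subst l) (rule imageI[OF lR])
qed

lemma Fs_cont: "continuous_on UNIV Fs"
proof -
  have c: "continuous_on (cball 0 R) Fs" for R
  proof (rule continuous_from_closed_graph[of "{0..2*R}"])
    show "compact {0..2*R}" by simp
    show "Fs \<in> cball 0 R \<rightarrow> {0..2*R}"
    proof
      fix A :: mat3 assume "A \<in> cball 0 R"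
      then have "norm A \<le> R" by simp
      then show "Fs A \<in> {0..2*R}" using Fs_bounds[of A] by simp
    qed
    show "closed ((\<lambda>x. (x, Fs x)) ` cball 0 R)" by (rule Fs_closed_graph)
  qed
  have "continuous (at A) Fs" for A
    by (rule continuous_on_interior[OF c[of "norm A + 1"]]) (simp add: interior_cball)
  then show ?thesis by (simp add: continuous_at_imp_continuous_on)
qed

lemma Gfun_Fs: "Gfun lam A = ((Fs A)^2 - E1 A)/2 - lam * Fs A - (kap3 A - lam * trace A)"
proof -
  have s: "is_sing_vals A (sing_vals A)" by (rule sing_vals_valid)
  show ?thesis unfolding Gfun_def Pfun_eq Nfun_def trace_cof Fs_def using valid_rels(1)[OF s] by simp
qed

lemma Gfun_cont: "continuous_on UNIV (Gfun lam)"
proof -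
  have e: "continuous_on UNIV (\<lambda>A::mat3. A $ i $ j)" for i j
    by (intro continuous_intros)
  have c1: "continuous_on UNIV E1" unfolding E1_def by (intro continuous_intros e)
  have c2: "continuous_on UNIV kap3" unfolding kap3_def by (intro continuous_intros e)
  have c3: "continuous_on UNIV (trace :: mat3 \<Rightarrow> real)" unfolding trace3 by (intro continuous_intros e)
  have "continuous_on UNIV (\<lambda>A. ((Fs A)^2 - E1 A)/2 - lam * Fs A - (kap3 A - lam * trace A))"
    by (intro continuous_intros Fs_cont c1 c2 c3) auto
  then show ?thesis unfolding Gfun_Fs[abs_def] .
qed


definition rad :: "real \<Rightarrow> mat3 \<Rightarrow> real" where "rad lam A = norm (A - lam *\<^sub>R mat 1)"
definition phi :: "nat \<Rightarrow> real \<Rightarrow> mat3 \<Rightarrow> real" where "phi k lam A = \<bar>Gfun lam A\<bar> / rad lam A ^ k"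
definition S2 :: "real \<Rightarrow> real \<Rightarrow> mat3 set" where "S2 lam c = {A. c \<le> rad lam A}"
definition S3 :: "real \<Rightarrow> real \<Rightarrow> mat3 set" where "S3 lam c = {A. 0 < rad lam A \<and> rad lam A < c}"

lemma M2_alt: "M2 lam c = (SUP A\<in>S2 lam c. phi 2 lam A)"
  unfolding M2_def S2_def phi_def rad_def by simp
lemma M3_alt: "M3 lam c = (SUP A\<in>S3 lam c. phi 3 lam A)"
  unfolding M3_def S3_def phi_def rad_def by simp

lemma phi_nonneg: "phi k lam A \<ge> 0" unfolding phi_def rad_def by simp

lemma Wit_rad: "rad lam (Wit lam e e) = sqrt 2 * \<bar>e\<bar>"
proof -
  have "e^2 + e^2 = 2 * e^2" by simp
  then have "sqrt (e^2 + e^2) = sqrt 2 * sqrt (e^2)" by (simp add: real_sqrt_mult)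
  then show ?thesis unfolding rad_def Wit_norm by simp
qed

lemma sqrt2_bounds: "1 < sqrt (2::real)" "sqrt (2::real) < 2"
proof -
  show "1 < sqrt (2::real)" by simp
  have "sqrt 2 < sqrt (4::real)" by (rule real_sqrt_less_mono) simp
  then show "sqrt (2::real) < 2" by simp
qed

lemma S2_ne: "c > 0 \<Longrightarrow> Wit lam c c \<in> S2 lam c"
  unfolding S2_def using Wit_rad[of lam c] sqrt2_bounds by (simp add: mult_le_cancel_right1 less_imp_le)

lemma S3_ne: "c > 0 \<Longrightarrow> Wit lam (c/2) (c/2) \<in> S3 lam c"
proof -
  assume c: "c > 0"
  have "rad lam (Wit lam (c/2) (c/2)) = sqrt 2 * (c/2)" using Wit_rad[of lam "c/2"] c by simp
  moreover have "sqrt 2 * (c/2) < 2 * (c/2)" using sqrt2_bounds c by (intro mult_strict_right_mono) auto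
  moreover have "sqrt 2 * (c/2) > 0" using c by simp
  ultimately show ?thesis unfolding S3_def by simp
qed

context
  fixes lam :: real
  assumes lam: "lam > 0"
begin

definition Qf :: "real \<Rightarrow> real" where "Qf h = 2 * (h + 2*lam)^2 + 4 * lam * (h + 2*lam)"

lemma g_quad: "\<bar>Gfun lam A\<bar> \<le> Qf (rad lam A)"
  unfolding Qf_def rad_def using Gfun_quad2[of lam A] lam by simp

lemma Qf_mono: "0 \<le> h \<Longrightarrow> h \<le> h' \<Longrightarrow> Qf h \<le> Qf h'"
  unfolding Qf_def using lam by (intro add_mono mult_left_mono power_mono) auto

lemma g_cubic: "rad lam A \<le> lam/1000 \<Longrightarrow> \<bar>Gfun lam A\<bar> \<le> 7 * rad lam A ^ 3 / lam"
  unfolding rad_def by (rule Gfun_cubic[OF lam])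

lemma bdd2: "c > 0 \<Longrightarrow> bdd_above (phi 2 lam ` S2 lam c)"
proof -
  assume c: "c > 0"
  define U where "U = 2*lam/c"
  have "phi 2 lam A \<le> 2*(1+U)^2 + 2*U*(1+U)" if A: "A \<in> S2 lam c" for A
  proof -
    define h where "h = rad lam A"
    have hc: "h \<ge> c" using A unfolding S2_def h_def by simp
    then have h0: "h > 0" using c by simp
    define u where "u = 2*lam/h"
    have u0: "0 \<le> u" unfolding u_def using lam h0 by simp
    have uU: "u \<le> U" unfolding u_def U_def using lam c hc by (simp add: frac_le)
    have "phi 2 lam A \<le> Qf h / h^2" unfolding phi_def h_def[symmetric]
      using g_quad[of A] h0 unfolding h_def by (simp add: divide_right_mono)
    also have "Qf h / h^2 = 2*(1+u)^2 + 2*u*(1+u)"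
      unfolding Qf_def u_def using h0 by (simp add: field_simps power2_eq_square)
    also have "\<dots> \<le> 2*(1+U)^2 + 2*U*(1+U)"
      using u0 uU by (intro add_mono mult_left_mono mult_mono power_mono) auto
    finally show ?thesis .
  qed
  then show ?thesis by (intro bdd_aboveI2) auto
qed

lemma bdd3: "c > 0 \<Longrightarrow> bdd_above (phi 3 lam ` S3 lam c)"
proof -
  assume c: "c > 0"
  define d where "d = lam/1000"
  have d0: "d > 0" unfolding d_def using lam by simp
  have "phi 3 lam A \<le> 7/lam + Qf c / d^3" if A: "A \<in> S3 lam c" for A
  proof -
    define h where "h = rad lam A"
    have h: "0 < h" "h < c" using A unfolding S3_def h_def by auto
    have q0: "Qf c / d^3 \<ge> 0" unfolding Qf_def using lam c d0 by simp
    have l0: "7/lam \<ge> 0" using lam by simp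
    show ?thesis
    proof (cases "h \<le> d")
      case True
      have "phi 3 lam A \<le> (7 * h^3 / lam) / h^3" unfolding phi_def h_def[symmetric]
        by (rule divide_right_mono) (use g_cubic[of A] True h in \<open>simp_all add: h_def d_def\<close>)
      also have "\<dots> = 7/lam" using h by simp
      finally show ?thesis using q0 by simp
    next
      case False
      have "phi 3 lam A \<le> Qf c / h^3" unfolding phi_def h_def[symmetric]
        using g_quad[of A] Qf_mono[of h c] h unfolding h_def
        by (intro divide_right_mono) auto
      also have "\<dots> \<le> Qf c / d^3"
        using False d0 q0 h unfolding Qf_def using lam c
        by (intro divide_left_mono power_mono mult_pos_pos) auto
      finally show ?thesis using l0 by linarith
    qed
  qed
  then show ?thesis by (intro bdd_aboveI2) auto
qed

lemma M2_anti: "0 < c \<Longrightarrow> c \<le> c' \<Longrightarrow> M2 lam c' \<le> M2 lam c"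
  unfolding M2_alt
proof (rule cSUP_subset_mono)
  assume c: "0 < c" "c \<le> c'"
  show "S2 lam c' \<noteq> {}" using S2_ne[of c' lam] c by auto
  show "bdd_above (phi 2 lam ` S2 lam c)" using bdd2 c by simp
  show "S2 lam c' \<subseteq> S2 lam c" using c unfolding S2_def by auto
qed simp

lemma M3_mono: "0 < c \<Longrightarrow> c \<le> c' \<Longrightarrow> M3 lam c \<le> M3 lam c'"
  unfolding M3_alt
proof (rule cSUP_subset_mono)
  assume c: "0 < c" "c \<le> c'"
  show "S3 lam c \<noteq> {}" using S3_ne[of c lam] c by auto
  show "bdd_above (phi 3 lam ` S3 lam c')" using bdd3 c by simp
  show "S3 lam c \<subseteq> S3 lam c'" using c unfolding S3_def by auto
qed simp

lemma M2_upper: "0 < c \<Longrightarrow> A \<in> S2 lam c \<Longrightarrow> phi 2 lam A \<le> M2 lam c"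
  unfolding M2_alt by (rule cSUP_upper) (use bdd2 in auto)

lemma M3_upper: "0 < c \<Longrightarrow> A \<in> S3 lam c \<Longrightarrow> phi 3 lam A \<le> M3 lam c"
  unfolding M3_alt by (rule cSUP_upper) (use bdd3 in auto)

lemma M2_pos: "0 < c \<Longrightarrow> M2 lam c > 0"
proof -
  assume c: "0 < c"
  have "phi 2 lam (Wit lam c c) > 0"
    unfolding phi_def using Wit_pos[OF lam c c] Wit_rad[of lam c] c by simp
  then show ?thesis using M2_upper[OF c S2_ne[OF c]] by simp
qed

lemma M3_pos: "0 < c \<Longrightarrow> M3 lam c > 0"
proof -
  assume c: "0 < c"
  have "rad lam (Wit lam (c/2) (c/2)) > 0" using S3_ne[OF c] unfolding S3_def by simp
  then have "phi 3 lam (Wit lam (c/2) (c/2)) > 0"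
    unfolding phi_def using Wit_pos[OF lam, of "c/2" "c/2"] c by simp
  then show ?thesis using M3_upper[OF c S3_ne[OF c]] by simp
qed

end


context
  fixes lam :: real
  assumes lam: "lam > 0"
begin

definition Kset :: "real \<Rightarrow> mat3 set" where
  "Kset c0 = {A. c0/8 \<le> rad lam A \<and> rad lam A \<le> 2*c0}"

lemma rad_dist: "rad lam A = dist (lam *\<^sub>R mat 1) A"
  unfolding rad_def dist_norm by (simp add: norm_minus_commute)

lemma Kset_compact: "compact (Kset c0)"
proof -
  have "Kset c0 = cball (lam *\<^sub>R mat 1) (2*c0) - ball (lam *\<^sub>R mat 1) (c0/8)"
    unfolding Kset_def rad_dist by auto
  then show ?thesis by (simp add: compact_diff)
qed

lemma rad_cont: "continuous_on S (rad lam)"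
  unfolding rad_def by (intro continuous_intros)

lemma phi_cont: "0 < c0 \<Longrightarrow> continuous_on (Kset c0) (phi k lam)"
proof -
  assume c0: "0 < c0"
  have g: "continuous_on (Kset c0) (Gfun lam)" by (rule continuous_on_subset[OF Gfun_cont]) simp
  have "continuous_on (Kset c0) (\<lambda>A. \<bar>Gfun lam A\<bar> / rad lam A ^ k)"
    using c0 by (intro continuous_intros g rad_cont) (auto simp: Kset_def)
  then show ?thesis unfolding phi_def[abs_def] .
qed

lemma phi_unif: "0 < c0 \<Longrightarrow> 0 < e \<Longrightarrow> \<exists>d>0. \<forall>A\<in>Kset c0. \<forall>A'\<in>Kset c0. dist A' A < d \<longrightarrow> \<bar>phi k lam A' - phi k lam A\<bar> < e"
proof -
  assume c0: "0 < c0" and e: "0 < e"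
  have "uniformly_continuous_on (Kset c0) (phi k lam)"
    by (rule compact_uniformly_continuous[OF phi_cont[OF c0] Kset_compact])
  then show ?thesis unfolding uniformly_continuous_on_def dist_real_def using e by blast
qed

lemma rad_shift: "0 \<le> a \<Longrightarrow> rad lam (lam *\<^sub>R mat 1 + a *\<^sub>R (A - lam *\<^sub>R mat 1)) = a * rad lam A"
  unfolding rad_def by simp

lemma dist_shift: "dist (lam *\<^sub>R mat 1 + a *\<^sub>R (A - lam *\<^sub>R mat 1)) A = \<bar>a - 1\<bar> * rad lam A"
proof -
  have "lam *\<^sub>R mat 1 + a *\<^sub>R (A - lam *\<^sub>R mat 1) - A = (a - 1) *\<^sub>R (A - lam *\<^sub>R mat 1)"
    by (simp add: algebra_simps)
  then show ?thesis unfolding dist_norm rad_def by simp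
qed

lemma M2_near:
  assumes c0: "0 < c0" and e: "0 < e"
  shows "\<exists>d>0. \<forall>c c'. c0/2 \<le> c \<longrightarrow> c \<le> c' \<longrightarrow> c' \<le> 2*c0 \<longrightarrow> c' - c < d \<longrightarrow> M2 lam c \<le> M2 lam c' + e"
proof -
  obtain d where d: "d > 0" "\<forall>A\<in>Kset c0. \<forall>A'\<in>Kset c0. dist A' A < d \<longrightarrow> \<bar>phi 2 lam A' - phi 2 lam A\<bar> < e"
    using phi_unif[OF c0 e] by blast
  have "M2 lam c \<le> M2 lam c' + e" if cc: "c0/2 \<le> c" "c \<le> c'" "c' \<le> 2*c0" "c' - c < d" for c c'
  proof -
    have cpos: "0 < c" using cc c0 by simp
    have c'pos: "0 < c'" using cc cpos by simp
    show ?thesis unfolding M2_alt[of lam c]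
    proof (rule cSUP_least)
      show "S2 lam c \<noteq> {}" using S2_ne[OF cpos] by auto
    next
      fix A assume A: "A \<in> S2 lam c"
      define rho where "rho = rad lam A"
      have rc: "c \<le> rho" using A unfolding S2_def rho_def by simp
      show "phi 2 lam A \<le> M2 lam c' + e"
      proof (cases "c' \<le> rho")
        case True
        then have "A \<in> S2 lam c'" unfolding S2_def rho_def by simp
        then show ?thesis using M2_upper[OF lam c'pos] e by force
      next
        case False
        have rpos: "rho > 0" using rc cpos by simp
        define A' where "A' = lam *\<^sub>R mat 1 + (c'/rho) *\<^sub>R (A - lam *\<^sub>R mat 1)"
        have rA': "rad lam A' = c'" unfolding A'_def using rad_shift[of "c'/rho" A] rpos c'pos
          unfolding rho_def by simp
        have dA': "dist A' A = c' - rho"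
        proof -
          have "dist A' A = \<bar>c'/rho - 1\<bar> * rho" unfolding A'_def rho_def by (rule dist_shift)
          also have "\<dots> = c' - rho" using rpos False by (simp add: abs_if field_simps)
          finally show ?thesis .
        qed
        have AK: "A \<in> Kset c0" unfolding Kset_def using rc False cc c0 unfolding rho_def by simp
        have A'K: "A' \<in> Kset c0" using rA' cc c0 unfolding Kset_def by simp
        have "\<bar>phi 2 lam A' - phi 2 lam A\<bar> < e" using d(2) AK A'K dA' rc cc by simp
        moreover have "phi 2 lam A' \<le> M2 lam c'" using M2_upper[OF lam c'pos] rA' unfolding S2_def by simp
        ultimately show ?thesis by linarith
      qed
    qed
  qed
  then show ?thesis using d(1) by blast
qed

lemma M3_near:
  assumes c0: "0 < c0" and e: "0 < e"
  shows "\<exists>d>0. \<forall>c c'. c0/2 \<le> c \<longrightarrow> c \<le> c' \<longrightarrow> c' \<le> 2*c0 \<longrightarrow> c' - c < d \<longrightarrow> M3 lam c' \<le> M3 lam c + e"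
proof -
  obtain d where d: "d > 0" "\<forall>A\<in>Kset c0. \<forall>A'\<in>Kset c0. dist A' A < d \<longrightarrow> \<bar>phi 3 lam A' - phi 3 lam A\<bar> < e"
    using phi_unif[OF c0 e] by blast
  have "M3 lam c' \<le> M3 lam c + e" if cc: "c0/2 \<le> c" "c \<le> c'" "c' \<le> 2*c0" "c' - c < d" for c c'
  proof -
    have cpos: "0 < c" using cc c0 by simp
    have c'pos: "0 < c'" using cc cpos by simp
    show ?thesis unfolding M3_alt[of lam c']
    proof (rule cSUP_least)
      show "S3 lam c' \<noteq> {}" using S3_ne[OF c'pos] by auto
    next
      fix A assume A: "A \<in> S3 lam c'"
      define rho where "rho = rad lam A"
      have rc: "0 < rho" "rho < c'" using A unfolding S3_def rho_def by auto
      show "phi 3 lam A \<le> M3 lam c + e"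
      proof (cases "rho < c")
        case True
        then have "A \<in> S3 lam c" using A unfolding S3_def rho_def by simp
        then show ?thesis using M3_upper[OF lam cpos] e by force
      next
        case False
        define A' where "A' = lam *\<^sub>R mat 1 + (c/c') *\<^sub>R (A - lam *\<^sub>R mat 1)"
        have rA': "rad lam A' = (c/c') * rho" unfolding A'_def using rad_shift[of "c/c'" A] cpos c'pos
          unfolding rho_def by simp
        have dA': "dist A' A = (1 - c/c') * rho"
        proof -
          have "dist A' A = \<bar>c/c' - 1\<bar> * rho" unfolding A'_def rho_def by (rule dist_shift)
          also have "\<bar>c/c' - 1\<bar> = 1 - c/c'" using cc c'pos by (simp add: abs_if field_simps)
          finally show ?thesis .
        qed
        have dlt: "dist A' A < d"
        proof -
          have "(1 - c/c') * rho = (c' - c) * (rho / c')" using c'pos by (simp add: field_simps)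
          also have "\<dots> \<le> (c' - c) * 1" using rc c'pos cc by (intro mult_left_mono) auto
          finally show ?thesis using dA' cc by simp
        qed
        have AK: "A \<in> Kset c0" unfolding Kset_def using rc False cc c0 unfolding rho_def by simp
        have lo: "c0/8 \<le> (c/c') * rho"
        proof -
          have "(c0/2) * (c0/2) \<le> c * rho" using cc False c0 by (intro mult_mono) auto
          moreover have "c0/8 * c' \<le> (c0/2) * (c0/2)" using cc c0 by (simp add: field_simps)
          ultimately have "c0/8 * c' \<le> c * rho" by linarith
          then show ?thesis using c'pos by (simp add: field_simps)
        qed
        have hi: "(c/c') * rho < c"
        proof -
          have "(c/c') * rho < (c/c') * c'" using rc cpos c'pos by (intro mult_strict_left_mono) auto
          then show ?thesis using c'pos by simp
        qed
        have A'K: "A' \<in> Kset c0" using rA' lo hi cc unfolding Kset_def by simp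
        have "\<bar>phi 3 lam A' - phi 3 lam A\<bar> < e" using d(2) AK A'K dlt by simp
        moreover have "phi 3 lam A' \<le> M3 lam c"
        proof -
          have "(c/c') * rho > 0" using cpos c'pos rc by simp
          then have "A' \<in> S3 lam c" using rA' hi unfolding S3_def by simp
          then show ?thesis using M3_upper[OF lam cpos] by simp
        qed
        ultimately show ?thesis by linarith
      qed
    qed
  qed
  then show ?thesis using d(1) by blast
qed

end


lemma powr_ident:
  fixes x y q :: real
  assumes x: "x > 0" and y: "y > 0"
  shows "(x/y) powr (q-2) / x = x powr (q-3) * y powr (2-q)"
    "(x/y) powr (q-3) / y = x powr (q-3) * y powr (2-q)"
proof -
  have a: "x powr (q-2) = x powr (q-3) * x"
  proof -
    have "x powr (q-2) = x powr ((q-3) + 1)" by simp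
    also have "\<dots> = x powr (q-3) * x powr 1" by (rule powr_add)
    finally show ?thesis using x by simp
  qed
  have b: "y powr (q-2) = y powr (q-3) * y"
  proof -
    have "y powr (q-2) = y powr ((q-3) + 1)" by simp
    also have "\<dots> = y powr (q-3) * y powr 1" by (rule powr_add)
    finally show ?thesis using y by simp
  qed
  have c: "y powr (2-q) = 1 / y powr (q-2)" using y by (simp add: powr_minus_divide[symmetric])
  have d: "(x/y) powr (q-2) = x powr (q-2) / y powr (q-2)" using x y by (simp add: powr_divide)
  have e: "(x/y) powr (q-3) = x powr (q-3) / y powr (q-3)" using x y by (simp add: powr_divide)
  show "(x/y) powr (q-2) / x = x powr (q-3) * y powr (2-q)"
    unfolding d a c using x y by (simp add: field_simps)
  show "(x/y) powr (q-3) / y = x powr (q-3) * y powr (2-q)"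
    unfolding e c b using x y by (simp add: field_simps)
qed

context
  fixes lam :: real
  assumes lam: "lam > 0"
begin

lemma M2_cont: "0 < c0 \<Longrightarrow> isCont (M2 lam) c0"
proof -
  assume c0: "0 < c0"
  show ?thesis unfolding continuous_at_eps_delta
  proof (intro allI impI)
    fix e :: real assume e: "0 < e"
    obtain d where d: "d > 0" "\<forall>c c'. c0/2 \<le> c \<longrightarrow> c \<le> c' \<longrightarrow> c' \<le> 2*c0 \<longrightarrow> c' - c < d \<longrightarrow> M2 lam c \<le> M2 lam c' + e/2"
      using M2_near[OF lam c0, of "e/2"] e by auto
    show "\<exists>d>0. \<forall>x'. dist x' c0 < d \<longrightarrow> dist (M2 lam x') (M2 lam c0) < e"
    proof (intro exI[of _ "min d (c0/2)"] conjI allI impI)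
      show "0 < min d (c0/2)" using d c0 by simp
      fix x assume x: "dist x c0 < min d (c0/2)"
      have xr: "\<bar>x - c0\<bar> < d" "\<bar>x - c0\<bar> < c0/2" using x by (auto simp: dist_real_def)
      have xpos: "0 < x" using xr(2) c0 unfolding abs_less_iff by linarith
      show "dist (M2 lam x) (M2 lam c0) < e"
      proof (cases "x \<le> c0")
        case True
        have "M2 lam x \<le> M2 lam c0 + e/2" using d(2) True xr c0 by simp
        moreover have "M2 lam c0 \<le> M2 lam x" using M2_anti[OF lam xpos True] .
        ultimately show ?thesis using e by (simp add: dist_real_def abs_le_iff)
      next
        case False
        have "M2 lam c0 \<le> M2 lam x + e/2" using d(2) False xr c0 by simp
        moreover have "M2 lam x \<le> M2 lam c0" using M2_anti[OF lam c0] False by simp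
        ultimately show ?thesis using e by (simp add: dist_real_def abs_le_iff)
      qed
    qed
  qed
qed

lemma M3_cont: "0 < c0 \<Longrightarrow> isCont (M3 lam) c0"
proof -
  assume c0: "0 < c0"
  show ?thesis unfolding continuous_at_eps_delta
  proof (intro allI impI)
    fix e :: real assume e: "0 < e"
    obtain d where d: "d > 0" "\<forall>c c'. c0/2 \<le> c \<longrightarrow> c \<le> c' \<longrightarrow> c' \<le> 2*c0 \<longrightarrow> c' - c < d \<longrightarrow> M3 lam c' \<le> M3 lam c + e/2"
      using M3_near[OF lam c0, of "e/2"] e by auto
    show "\<exists>d>0. \<forall>x'. dist x' c0 < d \<longrightarrow> dist (M3 lam x') (M3 lam c0) < e"
    proof (intro exI[of _ "min d (c0/2)"] conjI allI impI)
      show "0 < min d (c0/2)" using d c0 by simp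
      fix x assume x: "dist x c0 < min d (c0/2)"
      have xr: "\<bar>x - c0\<bar> < d" "\<bar>x - c0\<bar> < c0/2" using x by (auto simp: dist_real_def)
      have xpos: "0 < x" using xr(2) c0 unfolding abs_less_iff by linarith
      show "dist (M3 lam x) (M3 lam c0) < e"
      proof (cases "x \<le> c0")
        case True
        have "M3 lam c0 \<le> M3 lam x + e/2" using d(2) True xr c0 by simp
        moreover have "M3 lam x \<le> M3 lam c0" using M3_mono[OF lam xpos True] .
        ultimately show ?thesis using e by (simp add: dist_real_def abs_le_iff)
      next
        case False
        have "M3 lam x \<le> M3 lam c0 + e/2" using d(2) False xr c0 by simp
        moreover have "M3 lam c0 \<le> M3 lam x" using M3_mono[OF lam c0] False by simp
        ultimately show ?thesis using e by (simp add: dist_real_def abs_le_iff)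
      qed
    qed
  qed
qed

lemma ratio_anti: "0 < c \<Longrightarrow> c \<le> c' \<Longrightarrow> M2 lam c' / M3 lam c' \<le> M2 lam c / M3 lam c"
  using M2_anti[OF lam] M3_mono[OF lam] M2_pos[OF lam] M3_pos[OF lam]
  by (intro frac_le) (auto intro: less_imp_le)

lemma fixed_exists: "\<exists>c. c > 0 \<and> M2 lam c / M3 lam c = c"
proof -
  define rho where "rho = M2 lam 1 / M3 lam 1"
  have rho: "rho > 0" unfolding rho_def using M2_pos[OF lam] M3_pos[OF lam] by simp
  define a where "a = min 1 (rho/2)"
  define b where "b = max 1 (rho + 1)"
  have a: "0 < a" "a \<le> 1" "a \<le> rho/2" unfolding a_def using rho by auto
  have b: "1 \<le> b" "rho + 1 \<le> b" unfolding b_def by auto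
  define psi where "psi = (\<lambda>c. M2 lam c / M3 lam c - c)"
  have pa: "psi a \<ge> 0"
  proof -
    have "rho \<le> M2 lam a / M3 lam a" unfolding rho_def using ratio_anti[OF a(1) a(2)] .
    then show ?thesis unfolding psi_def using a by simp
  qed
  have pb: "psi b \<le> 0"
  proof -
    have "M2 lam b / M3 lam b \<le> rho" unfolding rho_def using ratio_anti[of 1 b] b by simp
    then show ?thesis unfolding psi_def using b by simp
  qed
  have cont: "continuous_on {a..b} psi"
  proof (rule continuous_at_imp_continuous_on, intro ballI)
    fix x assume "x \<in> {a..b}"
    then have x: "0 < x" using a by simp
    have "M3 lam x \<noteq> 0" using M3_pos[OF lam x] by simp
    then show "isCont psi x" unfolding psi_def
      by (intro continuous_intros M2_cont[OF x] M3_cont[OF x] isCont_divide)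
  qed
  obtain x where x: "a \<le> x" "x \<le> b" "psi x = 0"
    using IVT2'[of psi b 0 a, OF pb pa _ cont] a b by auto
  show ?thesis using x a unfolding psi_def by (intro exI[of _ x]) auto
qed

lemma fixed_unique: "0 < c1 \<Longrightarrow> M2 lam c1 / M3 lam c1 = c1 \<Longrightarrow> 0 < c2 \<Longrightarrow> M2 lam c2 / M3 lam c2 = c2 \<Longrightarrow> c1 = c2"
proof -
  assume h: "0 < c1" "M2 lam c1 / M3 lam c1 = c1" "0 < c2" "M2 lam c2 / M3 lam c2 = c2"
  show "c1 = c2"
  proof (rule ccontr)
    assume "c1 \<noteq> c2"
    then consider "c1 < c2" | "c2 < c1" by linarith
    then show False
    proof cases
      case 1 then show False using ratio_anti[OF h(1), of c2] h by simp
    next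
      case 2 then show False using ratio_anti[OF h(3), of c1] h by simp
    qed
  qed
qed

end


theorem lemma3p3:
  fixes lam q :: real
  assumes "lam > 0" and "2 < q" and "q < 3"
  defines "f1 \<equiv> (\<lambda>c0. c0 powr (q - 2) / M2 lam c0)"
      and "f2 \<equiv> (\<lambda>c0. c0 powr (q - 3) / M3 lam c0)"
  shows "mono_on {0<..} f1 \<and>
         antimono_on {0<..} f2 \<and>
         (\<exists>!c. c > 0 \<and> M2 lam c / M3 lam c = c) \<and>
         (\<forall>c. c > 0 \<and> M2 lam c / M3 lam c = c \<longrightarrow>
           (INF c0\<in>{0<..}. max (f1 c0) (f2 c0)) = M2 lam c powr (q - 3) * M3 lam c powr (2 - q))"
proof -
  have lam: "lam > 0" using assms(1) .
  have m1: "mono_on {0<..} f1"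
  proof (rule mono_onI)
    fix r s :: real assume r: "r \<in> {0<..}" and s: "s \<in> {0<..}" and rs: "r \<le> s"
    have "r powr (q-2) \<le> s powr (q-2)" using r rs assms(2) by (intro powr_mono2) auto
    moreover have "M2 lam s \<le> M2 lam r" using M2_anti[OF lam, of r s] r rs by simp
    moreover have "0 < M2 lam s" using M2_pos[OF lam, of s] s by simp
    ultimately show "f1 r \<le> f1 s" unfolding f1_def by (intro frac_le) auto
  qed
  have m2: "antimono_on {0<..} f2"
  proof (rule monotone_onI)
    fix r s :: real assume r: "r \<in> {0<..}" and s: "s \<in> {0<..}" and rs: "r \<le> s"
    have "s powr (q-3) \<le> r powr (q-3)" using r rs assms(3) by (intro powr_mono2') auto
    moreover have "M3 lam r \<le> M3 lam s" using M3_mono[OF lam, of r s] r rs by simp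
    moreover have "0 < M3 lam r" using M3_pos[OF lam, of r] r by simp
    ultimately show "f2 s \<le> f2 r" unfolding f2_def by (intro frac_le) auto
  qed
  have ex: "\<exists>!c. c > 0 \<and> M2 lam c / M3 lam c = c"
    using fixed_exists[OF lam] fixed_unique[OF lam] by blast
  have inf: "(INF c0\<in>{0<..}. max (f1 c0) (f2 c0)) = M2 lam c powr (q - 3) * M3 lam c powr (2 - q)"
    if c: "c > 0" "M2 lam c / M3 lam c = c" for c
  proof -
    define v where "v = M2 lam c powr (q - 3) * M3 lam c powr (2 - q)"
    have p2: "M2 lam c > 0" using M2_pos[OF lam c(1)] .
    have p3: "M3 lam c > 0" using M3_pos[OF lam c(1)] .
    have f1c: "f1 c = v" unfolding f1_def v_def
      using powr_ident(1)[OF p2 p3, of q] c(2) by simp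
    have f2c: "f2 c = v" unfolding f2_def v_def
      using powr_ident(2)[OF p2 p3, of q] c(2) by simp
    show ?thesis unfolding v_def[symmetric]
    proof (rule cInf_eq_minimum)
      show "v \<in> (\<lambda>c0. max (f1 c0) (f2 c0)) ` {0<..}"
        using c(1) f1c f2c by (intro image_eqI[of _ _ c]) auto
    next
      fix x assume "x \<in> (\<lambda>c0. max (f1 c0) (f2 c0)) ` {0<..}"
      then obtain c0 where c0: "c0 > 0" "x = max (f1 c0) (f2 c0)" by auto
      show "v \<le> x"
      proof (cases "c \<le> c0")
        case True
        have "f1 c \<le> f1 c0" using mono_onD[OF m1, of c c0] c(1) c0 True by simp
        then show ?thesis using c0 f1c by simp
      next
        case False
        have "f2 c \<le> f2 c0" using monotone_onD[OF m2, of c0 c] c(1) c0 False by simp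
        then show ?thesis using c0 f2c by simp
      qed
    qed
  qed
  show ?thesis using m1 m2 ex inf by blast
qed


end
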